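(* Let $n\geq 5$. Suppose (1) every graph in $\mathcal{GAQ}_{n-1}$ is even strongly super matched, and (2) every graph in $\mathcal{GAQ}_{n-1}$ is fractional strongly super matched. Then every graph in $\mathcal{GAQ}_n$ is fractional strongly super matched.
   Context: The $n$-dimensional augmented cube $AQ_n$ ($n\geq 1$) has vertex set all binary strings $u_1u_2\cdots u_n$. $AQ_1\cong K_2$ on vertices $0,1$. For $n\geq 2$, $AQ_n$ consists of a copy $AQ^0_{n-1}$ of $AQ_{n-1}$ with $0$ prefixed to every label and a copy $AQ^1_{n-1}$ with $1$ prefixed, plus the following edges: $0u_1\cdots u_{n-1}$ is adjacent to $1v_1\cdots v_{n-1}$ iff either $u_i=v_i$ for all $i$ (cross edge) or $u_i\neq v_i$ for all $i$ (complement edge). Generalized augmented cubes: $\mathcal{GAQ}_4=\{AQ_4\}$; for $n\geq 5$, $\mathcal{GAQ}_n$ consists of all graphs $(V_1\cup V_2, E_1\cup E_2\cup M_1\cup M_2)$ where $(V_1,E_1),(V_2,E_2)$ are (vertex-disjoint copies of, possibly identical) graphs in $\mathcal{GAQ}_{n-1}$ and $M_1,M_2$ are edge-disjoint perfect matchings between $V_1$ and $V_2$; such graphs are $(2n-1)$-regular on $2^n$ vertices. For $F\subseteq V(G)\cup E(G)$, $G-F$ denotes $G$ with the vertices and edges of $F$ deleted. A strong matching preclusion (SMP) set of $G$ is a set $F\subseteq V(G)\cup E(G)$ such that $G-F$ has neither a perfect matching nor an almost-perfect matching (a matching covering all vertices but one); $smp(G)$ is the minimum size of an SMP set, and an SMP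 set of that size is optimal. $G$ is strongly maximally matched if $smp(G)=\delta(G)$ (minimum degree). For an even graph $G$ (even number of vertices), an optimal SMP set $F$ is trivial if $G-F$ has an isolated vertex and $F$ contains an even number of vertices. $G$ is even strongly super matched if it is strongly maximally matched and every optimal SMP set containing an even number of vertices is trivial. A fractional perfect matching of $G$ is $f:E(G)\to[0,1]$ with $\sum_{e\ni v}f(e)=1$ for every vertex $v$. A fractional strong matching preclusion (FSMP) set is $F\subseteq V(G)\cup E(G)$ with $G-F$ having no fractional perfect matching; $fsmp(G)$ is the minimum size of an FSMP set, and an FSMP set of that size is optimal. $G$ is fractional strongly maximally matched if $fsmp(G)=\delta(G)$, and fractional strongly super matched if in addition $G-F$ has an isolated vertex for every optimal FSMP set $F$. *)

theory Defs
  imports Complex_Main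
begin

text \<open>A (finite simple) graph is a pair (V, E) of a vertex set and a set of
  2-element edges.\<close>
type_synonym 'a graph = "'a set \<times> 'a set set"

definition verts :: "'a graph \<Rightarrow> 'a set" where "verts G = fst G"
definition edges :: "'a graph \<Rightarrow> 'a set set" where "edges G = snd G"

fun aq_adj :: "bool list \<Rightarrow> bool list \<Rightarrow> bool" where
  "aq_adj [] [] = False"
| "aq_adj (a # u) (b # v) =
     (length u = length v \<and>
      (if a = b then aq_adj u v else (u = v \<or> list_all2 (\<noteq>) u v)))"
| "aq_adj _ _ = False"

definition AQ :: "nat \<Rightarrow> bool list graph" where
  "AQ n = ({xs. length xs = n},
           {{u, v} | u v. length u = n \<and> length v = n \<and> aq_adj u v})"

definition graph_image :: "('b \<Rightarrow> 'a) \<Rightarrow> 'b graph \<Rightarrow> 'a graph" where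
  "graph_image f G = (f ` verts G, (\<lambda>e. f ` e) ` edges G)"

definition perfect_matching_between :: "'a set set \<Rightarrow> 'a set \<Rightarrow> 'a set \<Rightarrow> bool" where
  "perfect_matching_between M V1 V2 \<longleftrightarrow>
     (\<forall>e\<in>M. \<exists>u\<in>V1. \<exists>v\<in>V2. e = {u, v}) \<and>
     (\<forall>x\<in>V1 \<union> V2. \<exists>!e. e \<in> M \<and> x \<in> e)"

inductive gaq :: "nat \<Rightarrow> 'a graph \<Rightarrow> bool" where
  base: "inj_on f (verts (AQ 4)) \<Longrightarrow> gaq 4 (graph_image f (AQ 4))"
| step: "\<lbrakk> gaq n (V1, E1); gaq n (V2, E2); V1 \<inter> V2 = {};
          perfect_matching_between M1 V1 V2; perfect_matching_between M2 V1 V2;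
          M1 \<inter> M2 = {} \<rbrakk>
         \<Longrightarrow> gaq (Suc n) (V1 \<union> V2, E1 \<union> E2 \<union> M1 \<union> M2)"

text \<open>Fault sets F \<subseteq> V(G) \<union> E(G), represented as a pair (vertex faults, edge faults).\<close>
definition fault_set :: "'a graph \<Rightarrow> 'a set \<times> 'a set set \<Rightarrow> bool" where
  "fault_set G F \<longleftrightarrow> fst F \<subseteq> verts G \<and> snd F \<subseteq> edges G"

definition fsize :: "'a set \<times> 'a set set \<Rightarrow> nat" where
  "fsize F = card (fst F) + card (snd F)"

definition delete :: "'a graph \<Rightarrow> 'a set \<times> 'a set set \<Rightarrow> 'a graph" where
  "delete G F = (verts G - fst F, {e \<in> edges G - snd F. e \<inter> fst F = {}})"

definition degree :: "'a graph \<Rightarrow> 'a \<Rightarrow> nat" where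
  "degree G v = card {e \<in> edges G. v \<in> e}"

definition min_degree :: "'a graph \<Rightarrow> nat" where
  "min_degree G = Min (degree G ` verts G)"

definition has_isolated_vertex :: "'a graph \<Rightarrow> bool" where
  "has_isolated_vertex G \<longleftrightarrow> (\<exists>v\<in>verts G. \<forall>e\<in>edges G. v \<notin> e)"

definition matching :: "'a graph \<Rightarrow> 'a set set \<Rightarrow> bool" where
  "matching G M \<longleftrightarrow> M \<subseteq> edges G \<and> (\<forall>e1\<in>M. \<forall>e2\<in>M. e1 \<noteq> e2 \<longrightarrow> e1 \<inter> e2 = {})"

definition perfect_matching :: "'a graph \<Rightarrow> 'a set set \<Rightarrow> bool" where
  "perfect_matching G M \<longleftrightarrow> matching G M \<and> \<Union>M = verts G"

definition almost_perfect_matching :: "'a graph \<Rightarrow> 'a set set \<Rightarrow> bool" where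
  "almost_perfect_matching G M \<longleftrightarrow> matching G M \<and> (\<exists>v\<in>verts G. \<Union>M = verts G - {v})"

definition fractional_perfect_matching :: "'a graph \<Rightarrow> ('a set \<Rightarrow> real) \<Rightarrow> bool" where
  "fractional_perfect_matching G f \<longleftrightarrow>
     (\<forall>e\<in>edges G. 0 \<le> f e \<and> f e \<le> 1) \<and>
     (\<forall>v\<in>verts G. (\<Sum>e\<in>{e \<in> edges G. v \<in> e}. f e) = 1)"

definition smp_set :: "'a graph \<Rightarrow> 'a set \<times> 'a set set \<Rightarrow> bool" where
  "smp_set G F \<longleftrightarrow> fault_set G F \<and>
     \<not> (\<exists>M. perfect_matching (delete G F) M) \<and>
     \<not> (\<exists>M. almost_perfect_matching (delete G F) M)"

definition smp :: "'a graph \<Rightarrow> nat" where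
  "smp G = (LEAST k. \<exists>F. smp_set G F \<and> fsize F = k)"

definition optimal_smp_set :: "'a graph \<Rightarrow> 'a set \<times> 'a set set \<Rightarrow> bool" where
  "optimal_smp_set G F \<longleftrightarrow> smp_set G F \<and> fsize F = smp G"

definition fsmp_set :: "'a graph \<Rightarrow> 'a set \<times> 'a set set \<Rightarrow> bool" where
  "fsmp_set G F \<longleftrightarrow> fault_set G F \<and>
     \<not> (\<exists>f. fractional_perfect_matching (delete G F) f)"

definition fsmp :: "'a graph \<Rightarrow> nat" where
  "fsmp G = (LEAST k. \<exists>F. fsmp_set G F \<and> fsize F = k)"

definition optimal_fsmp_set :: "'a graph \<Rightarrow> 'a set \<times> 'a set set \<Rightarrow> bool" where
  "optimal_fsmp_set G F \<longleftrightarrow> fsmp_set G F \<and> fsize F = fsmp G"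

definition strongly_maximally_matched :: "'a graph \<Rightarrow> bool" where
  "strongly_maximally_matched G \<longleftrightarrow> smp G = min_degree G"

definition trivial_optimal_smp_set :: "'a graph \<Rightarrow> 'a set \<times> 'a set set \<Rightarrow> bool" where
  "trivial_optimal_smp_set G F \<longleftrightarrow>
     optimal_smp_set G F \<and> has_isolated_vertex (delete G F) \<and> even (card (fst F))"

definition even_strongly_super_matched :: "'a graph \<Rightarrow> bool" where
  "even_strongly_super_matched G \<longleftrightarrow> strongly_maximally_matched G \<and>
     (\<forall>F. optimal_smp_set G F \<and> even (card (fst F)) \<longrightarrow> trivial_optimal_smp_set G F)"

definition fractional_strongly_maximally_matched :: "'a graph \<Rightarrow> bool" where
  "fractional_strongly_maximally_matched G \<longleftrightarrow> fsmp G = min_degree G"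

definition fractional_strongly_super_matched :: "'a graph \<Rightarrow> bool" where
  "fractional_strongly_super_matched G \<longleftrightarrow> fractional_strongly_maximally_matched G \<and>
     (\<forall>F. optimal_fsmp_set G F \<longrightarrow> has_isolated_vertex (delete G F))"

end

theory Submission
  imports Defs
begin
definition all4 :: "bool list list" where "all4 = List.n_lists 4 [False, True]"

lemma all4_set: "set all4 = {xs. length xs = 4}"
  by (auto simp: all4_def set_n_lists)

lemma all4_dist: "distinct all4"
  unfolding all4_def by code_simp

lemma all4_len: "length all4 = 16"
  unfolding all4_def by code_simp

lemma aq4_deg: "\<forall>x\<in>set all4. length (filter (aq_adj x) all4) = 7"
  by code_simp

lemma aq4_common: "\<forall>x\<in>set all4. \<forall>u\<in>set all4. x \<noteq> u \<longrightarrow> length (filter (\<lambda>w. aq_adj x w \<and> aq_adj u w) all4) \<le> 4"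
  by code_simp

lemma aq_adj_irrefl: "\<not> aq_adj u u"
  by (induction u) auto

lemma aq_adj_sym: "aq_adj u v \<Longrightarrow> aq_adj v u"
  by (induction u v rule: aq_adj.induct) (auto simp: list_all2_conv_all_nth)

definition nb :: "'a graph \<Rightarrow> 'a \<Rightarrow> 'a set" where "nb G x = {w. {x,w} \<in> edges G}"

definition wfe :: "'a set \<Rightarrow> 'a set set \<Rightarrow> bool" where
  "wfe V E \<longleftrightarrow> (\<forall>e\<in>E. \<exists>u v. u \<noteq> v \<and> u \<in> V \<and> v \<in> V \<and> e = {u,v})"

definition gstruct :: "nat \<Rightarrow> 'a graph \<Rightarrow> bool" where
  "gstruct m G \<longleftrightarrow> m \<ge> 4 \<and> finite (verts G) \<and> wfe (verts G) (edges G) \<and> card (verts G) = 2^m \<and>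
     (\<forall>x\<in>verts G. card (nb G x) = 2*m - 1) \<and>
     (\<forall>x\<in>verts G. \<forall>u\<in>verts G. x \<noteq> u \<longrightarrow> card (nb G x \<inter> nb G u) \<le> 2*m - 4)"

lemma filter_card: "card {w \<in> set all4. P w} = length (filter P all4)"
proof -
  have "{w \<in> set all4. P w} = set (filter P all4)" by auto
  thus ?thesis using distinct_card[OF distinct_filter[OF all4_dist]] by simp
qed

lemma base_struct:
  assumes inj: "inj_on f (verts (AQ 4))"
  shows "gstruct 4 (graph_image f (AQ 4))"
proof -
  let ?V = "{xs::bool list. length xs = 4}"
  let ?G = "graph_image f (AQ 4)"
  have V: "verts (AQ 4) = ?V" by (simp add: AQ_def verts_def)
  have vG: "verts ?G = f ` ?V" by (simp add: graph_image_def verts_def AQ_def)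
  have eG: "edges ?G = (\<lambda>e. f ` e) ` {{u, v} | u v. length u = 4 \<and> length v = 4 \<and> aq_adj u v}"
    by (simp add: graph_image_def edges_def AQ_def)
  have inj': "inj_on f ?V" using inj V by simp
  have nbf: "nb ?G (f x) = f ` {w \<in> ?V. aq_adj x w}" if x: "x \<in> ?V" for x
  proof
    show "nb ?G (f x) \<subseteq> f ` {w \<in> ?V. aq_adj x w}"
    proof
      fix y assume "y \<in> nb ?G (f x)"
      then obtain u v where uv: "length u = 4" "length v = 4" "aq_adj u v" "{f x, y} = {f u, f v}"
        unfolding nb_def eG by auto
      from uv(4) have "(f x = f u \<and> y = f v) \<or> (f x = f v \<and> y = f u)" by (auto simp: doubleton_eq_iff)
      thus "y \<in> f ` {w \<in> ?V. aq_adj x w}"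
      proof
        assume h: "f x = f u \<and> y = f v"
        then have "x = u" using inj'[unfolded inj_on_def] x uv by auto
        thus ?thesis using h uv by auto
      next
        assume h: "f x = f v \<and> y = f u"
        then have "x = v" using inj'[unfolded inj_on_def] x uv by auto
        thus ?thesis using h uv aq_adj_sym by auto
      qed
    qed
  next
    show "f ` {w \<in> ?V. aq_adj x w} \<subseteq> nb ?G (f x)"
    proof
      fix y assume "y \<in> f ` {w \<in> ?V. aq_adj x w}"
      then obtain w where w: "length w = 4" "aq_adj x w" "y = f w" by auto
      have "{f x, y} = (\<lambda>e. f ` e) {x, w}" using w by auto
      moreover have "{x,w} \<in> {{u, v} | u v. length u = 4 \<and> length v = 4 \<and> aq_adj u v}"
        using w x by auto
      ultimately show "y \<in> nb ?G (f x)" unfolding nb_def eG by blast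
    qed
  qed
  have S: "{w \<in> ?V. P w} = {w \<in> set all4. P w}" for P using all4_set by auto
  have cardS: "card (f ` {w \<in> ?V. P w}) = length (filter P all4)" for P
  proof -
    have "card (f ` {w \<in> ?V. P w}) = card {w \<in> ?V. P w}"
      by (rule card_image) (rule inj_on_subset[OF inj'], auto)
    thus ?thesis using S filter_card by simp
  qed
  have fin: "finite (verts ?G)" unfolding vG using all4_set by (metis finite_set finite_imageI)
  have wf: "wfe (verts ?G) (edges ?G)"
    unfolding wfe_def
  proof
    fix e assume "e \<in> edges ?G"
    then obtain u v where uv: "length u = 4" "length v = 4" "aq_adj u v" "e = {f u, f v}"
      unfolding eG by auto
    have "u \<noteq> v" using uv(3) aq_adj_irrefl by metis
    hence "f u \<noteq> f v" using inj'[unfolded inj_on_def] uv by auto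
    thus "\<exists>a b. a \<noteq> b \<and> a \<in> verts ?G \<and> b \<in> verts ?G \<and> e = {a, b}" using uv vG by auto
  qed
  have cV: "card (verts ?G) = 2^4"
  proof -
    have "card (verts ?G) = card ?V" unfolding vG by (rule card_image[OF inj'])
    also have "\<dots> = length all4" using all4_set distinct_card[OF all4_dist] by simp
    finally show ?thesis using all4_len by simp
  qed
  have deg: "\<forall>x\<in>verts ?G. card (nb ?G x) = 2*4 - 1"
  proof
    fix y assume "y \<in> verts ?G"
    then obtain x where x: "x \<in> ?V" "y = f x" using vG by auto
    have "card (nb ?G y) = length (filter (aq_adj x) all4)" using nbf[OF x(1)] cardS x by simp
    also have "\<dots> = 7" using aq4_deg x all4_set by auto
    finally show "card (nb ?G y) = 2*4 - 1" by simp
  qed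
  have com: "\<forall>x\<in>verts ?G. \<forall>u\<in>verts ?G. x \<noteq> u \<longrightarrow> card (nb ?G x \<inter> nb ?G u) \<le> 2*4 - 4"
  proof (intro ballI impI)
    fix y y' assume "y \<in> verts ?G" "y' \<in> verts ?G" "y \<noteq> y'"
    then obtain x x' where x: "x \<in> ?V" "y = f x" "x' \<in> ?V" "y' = f x'" "x \<noteq> x'" using vG by auto
    have "nb ?G y \<inter> nb ?G y' = f ` ({w \<in> ?V. aq_adj x w} \<inter> {w \<in> ?V. aq_adj x' w})"
      using nbf x inj_on_image_Int[OF inj', of "{w \<in> ?V. aq_adj x w}" "{w \<in> ?V. aq_adj x' w}"] by auto
    also have "\<dots> = f ` {w \<in> ?V. aq_adj x w \<and> aq_adj x' w}" by blast
    finally have "card (nb ?G y \<inter> nb ?G y') = length (filter (\<lambda>w. aq_adj x w \<and> aq_adj x' w) all4)"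
      using cardS by simp
    also have "\<dots> \<le> 4" using aq4_common x all4_set by auto
    finally show "card (nb ?G y \<inter> nb ?G y') \<le> 2*4 - 4" by simp
  qed
  show ?thesis unfolding gstruct_def using fin wf cV deg com by simp
qed

lemma pmb_sym: assumes h: "perfect_matching_between M V1 V2" shows "perfect_matching_between M V2 V1"
proof -
  have h1: "\<forall>e\<in>M. \<exists>u\<in>V1. \<exists>v\<in>V2. e = {u, v}" and h2: "\<forall>x\<in>V1 \<union> V2. \<exists>!e. e \<in> M \<and> x \<in> e"
    using h unfolding perfect_matching_between_def by auto
  have "\<forall>e\<in>M. \<exists>u\<in>V2. \<exists>v\<in>V1. e = {u, v}"
  proof
    fix e assume "e \<in> M"
    then obtain u v where uv: "u \<in> V1" "v \<in> V2" "e = {u,v}" using h1 by blast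
    have "e = {v,u}" using uv(3) by (simp add: insert_commute)
    thus "\<exists>u\<in>V2. \<exists>v\<in>V1. e = {u, v}" using uv by blast
  qed
  moreover have "\<forall>x\<in>V2 \<union> V1. \<exists>!e. e \<in> M \<and> x \<in> e" using h2 by (simp add: Un_commute)
  ultimately show ?thesis unfolding perfect_matching_between_def by blast
qed

lemma pmb_edge: "perfect_matching_between M V1 V2 \<Longrightarrow> e \<in> M \<Longrightarrow> \<exists>u\<in>V1. \<exists>v\<in>V2. e = {u,v}"
  unfolding perfect_matching_between_def by blast

lemma pmb_partner:
  assumes pm: "perfect_matching_between M V1 V2" and d: "V1 \<inter> V2 = {}" and x: "x \<in> V1"
  shows "\<exists>v\<in>V2. {w. {x,w} \<in> M} = {v}"
proof -
  have "\<exists>!e. e \<in> M \<and> x \<in> e" using pm x unfolding perfect_matching_between_def by simp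
  then obtain e where e: "e \<in> M" "x \<in> e" and uq: "\<And>e'. e' \<in> M \<and> x \<in> e' \<Longrightarrow> e' = e"
    by (elim ex1E) blast
  obtain a b where ab: "a \<in> V1" "b \<in> V2" "e = {a,b}" using pmb_edge[OF pm e(1)] by blast
  have xa: "x = a" using e(2) ab d x by auto
  have xb: "x \<noteq> b" using ab d x by auto
  have "{w. {x,w} \<in> M} = {b}"
  proof
    show "{w. {x,w} \<in> M} \<subseteq> {b}"
    proof
      fix w assume "w \<in> {w. {x,w} \<in> M}"
      hence "{x,w} = e" using uq by auto
      thus "w \<in> {b}" using ab xa xb by (auto simp: doubleton_eq_iff)
    qed
    show "{b} \<subseteq> {w. {x,w} \<in> M}" using e ab xa by auto
  qed
  thus ?thesis using ab by blast
qed

locale twoh =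
  fixes V1 :: "'a set" and E1 :: "'a set set" and V2 :: "'a set" and E2 :: "'a set set" and M1 M2 :: "'a set set"
  assumes fin1: "finite V1" and fin2: "finite V2"
  and wf1: "wfe V1 E1" and wf2: "wfe V2 E2"
  and disj: "V1 \<inter> V2 = {}"
  and pm1: "perfect_matching_between M1 V1 V2" and pm2: "perfect_matching_between M2 V1 V2"
  and dM: "M1 \<inter> M2 = {}"
begin

lemma sym: "twoh V2 E2 V1 E1 M1 M2"
proof
  show "finite V2" "finite V1" "wfe V2 E2" "wfe V1 E1" "M1 \<inter> M2 = {}" by (fact fin2 fin1 wf2 wf1 dM)+
  show "V2 \<inter> V1 = {}" using disj by blast
  show "perfect_matching_between M1 V2 V1" "perfect_matching_between M2 V2 V1" using pm1 pm2 pmb_sym by blast+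
qed

lemma wfe_sub: assumes "wfe V E" "e \<in> E" shows "e \<subseteq> V"
proof -
  obtain u v where "u \<in> V" "v \<in> V" "e = {u,v}" using assms unfolding wfe_def by meson
  thus ?thesis by simp
qed
lemma E1sub: "e \<in> E1 \<Longrightarrow> e \<subseteq> V1" using wf1 wfe_sub by metis
lemma E2sub: "e \<in> E2 \<Longrightarrow> e \<subseteq> V2" using wf2 wfe_sub by metis

lemma Medge: assumes "e \<in> M1 \<union> M2" shows "\<exists>u\<in>V1. \<exists>v\<in>V2. e = {u,v}"
proof (cases "e \<in> M1")
  case True thus ?thesis using pmb_edge[OF pm1] by metis
next
  case False thus ?thesis using pmb_edge[OF pm2] assms by auto
qed

lemma M_not_E1: assumes "e \<in> M1 \<union> M2" shows "e \<notin> E1"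
proof
  assume "e \<in> E1"
  obtain u v where "u\<in>V1" "v\<in>V2" "e = {u,v}" using Medge assms by blast
  thus False using E1sub[OF \<open>e \<in> E1\<close>] disj by blast
qed
lemma M_not_E2: assumes "e \<in> M1 \<union> M2" shows "e \<notin> E2"
proof
  assume "e \<in> E2"
  obtain u v where "u\<in>V1" "v\<in>V2" "e = {u,v}" using Medge assms by blast
  thus False using E2sub[OF \<open>e \<in> E2\<close>] disj by blast
qed
lemma E12: assumes "e \<in> E1" shows "e \<notin> E2"
proof
  assume "e \<in> E2"
  obtain u v where "u\<in>V1" "e = {u,v}" using wf1 assms unfolding wfe_def by blast
  thus False using E2sub[OF \<open>e \<in> E2\<close>] disj by blast
qed

lemma part1: "x \<in> V1 \<Longrightarrow> \<exists>v\<in>V2. {w. {x,w} \<in> M1} = {v}"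
  using pmb_partner[OF pm1 disj] by blast
lemma part2: "x \<in> V1 \<Longrightarrow> \<exists>v\<in>V2. {w. {x,w} \<in> M2} = {v}"
  using pmb_partner[OF pm2 disj] by blast

definition cross :: "'a \<Rightarrow> 'a set" where "cross x = {w. {x,w} \<in> M1 \<union> M2}"

lemma cross_card: assumes "x \<in> V1" shows "cross x \<subseteq> V2" "card (cross x) = 2" "finite (cross x)"
proof -
  obtain v1 where v1: "v1 \<in> V2" "{w. {x,w} \<in> M1} = {v1}" using part1 assms by blast
  obtain v2 where v2: "v2 \<in> V2" "{w. {x,w} \<in> M2} = {v2}" using part2 assms by blast
  have ne: "v1 \<noteq> v2" using v1 v2 dM by auto
  have "cross x = {w. {x,w} \<in> M1} \<union> {w. {x,w} \<in> M2}" unfolding cross_def by blast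
  hence "cross x = {v1, v2}" using v1(2) v2(2) by (simp add: insert_commute)
  thus "cross x \<subseteq> V2" "card (cross x) = 2" "finite (cross x)" using ne v1 v2 by auto
qed

lemma nb_step: assumes x: "x \<in> V1"
  shows "nb (V1 \<union> V2, E1 \<union> E2 \<union> M1 \<union> M2) x = nb (V1, E1) x \<union> cross x"
proof -
  have "{x,w} \<notin> E2" for w using E2sub x disj by blast
  thus ?thesis unfolding nb_def cross_def edges_def by auto
qed

lemma nb1_sub: "nb (V1,E1) x \<subseteq> V1" using E1sub unfolding nb_def edges_def by auto

end

lemma step_struct:
  assumes g1: "gstruct m (V1, E1)" and g2: "gstruct m (V2, E2)" and d: "V1 \<inter> V2 = {}"
    and p1: "perfect_matching_between M1 V1 V2" and p2: "perfect_matching_between M2 V1 V2"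
    and dM: "M1 \<inter> M2 = {}"
  shows "gstruct (Suc m) (V1 \<union> V2, E1 \<union> E2 \<union> M1 \<union> M2)"
proof -
  have m4: "m \<ge> 4" using g1 unfolding gstruct_def by simp
  interpret T: twoh V1 E1 V2 E2 M1 M2
  proof
    show "finite V1" "wfe V1 E1" using g1 unfolding gstruct_def verts_def edges_def by simp_all
    show "finite V2" "wfe V2 E2" using g2 unfolding gstruct_def verts_def edges_def by simp_all
  qed (fact d p1 p2 dM)+
  interpret S: twoh V2 E2 V1 E1 M1 M2 by (rule T.sym)
  let ?G = "(V1 \<union> V2, E1 \<union> E2 \<union> M1 \<union> M2)"
  have eqG: "(V2 \<union> V1, E2 \<union> E1 \<union> M1 \<union> M2) = ?G" by auto
  have fin: "finite (verts ?G)" using T.fin1 T.fin2 by (simp add: verts_def)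
  have wf: "wfe (verts ?G) (edges ?G)"
    unfolding wfe_def verts_def edges_def
  proof (simp only: fst_conv snd_conv, intro ballI)
    fix e assume "e \<in> E1 \<union> E2 \<union> M1 \<union> M2"
    hence "e \<in> E1 \<or> e \<in> E2 \<or> e \<in> M1 \<union> M2" by blast
    thus "\<exists>u v. u \<noteq> v \<and> u \<in> V1 \<union> V2 \<and> v \<in> V1 \<union> V2 \<and> e = {u, v}"
    proof (elim disjE)
      assume "e \<in> E1" thus ?thesis using T.wf1 unfolding wfe_def by blast
    next
      assume "e \<in> E2" thus ?thesis using T.wf2 unfolding wfe_def by blast
    next
      assume "e \<in> M1 \<union> M2"
      then obtain u v where "u\<in>V1" "v\<in>V2" "e = {u,v}" using T.Medge by blast
      moreover have "u \<noteq> v" using calculation d by blast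
      ultimately show ?thesis by blast
    qed
  qed
  have cV: "card (verts ?G) = 2^(Suc m)"
    using g1 g2 d T.fin1 T.fin2 unfolding gstruct_def verts_def by (simp add: card_Un_disjoint)
  have deg1: "card (nb (V1 \<union> V2, E1 \<union> E2 \<union> M1 \<union> M2) x) = 2 * Suc m - 1" if x: "x \<in> V1" and gi: "gstruct m (V1,E1)"
    and TT: "twoh V1 E1 V2 E2 M1 M2" for V1 E1 V2 E2 M1 M2 and x :: 'a
  proof -
    interpret U: twoh V1 E1 V2 E2 M1 M2 by (rule TT)
    have "card (nb (V1,E1) x) = 2*m - 1" using gi x unfolding gstruct_def verts_def by simp
    moreover have "nb (V1,E1) x \<inter> U.cross x = {}" using U.nb1_sub U.cross_card[OF x] U.disj by blast
    moreover have "finite (nb (V1,E1) x)" using U.nb1_sub U.fin1 finite_subset by blast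
    ultimately have "card (nb (V1,E1) x \<union> U.cross x) = 2*m - 1 + 2"
      using U.cross_card[OF x] by (simp add: card_Un_disjoint)
    thus ?thesis using U.nb_step[OF x] m4 by simp
  qed
  have deg: "\<forall>x\<in>verts ?G. card (nb ?G x) = 2*(Suc m) - 1"
  proof
    fix x assume "x \<in> verts ?G"
    hence "x \<in> V1 \<or> x \<in> V2" by (simp add: verts_def)
    thus "card (nb ?G x) = 2*(Suc m) - 1"
    proof
      assume "x \<in> V1" thus ?thesis using deg1[OF _ g1 T.twoh_axioms] by blast
    next
      assume "x \<in> V2" thus ?thesis using deg1[OF _ g2 S.twoh_axioms, of x] eqG by simp
    qed
  qed
  have com1: "card (nb (V1 \<union> V2, E1 \<union> E2 \<union> M1 \<union> M2) x \<inter> nb (V1 \<union> V2, E1 \<union> E2 \<union> M1 \<union> M2) u) \<le> 2 * Suc m - 4"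
    if x: "x \<in> V1" and u: "u \<in> V1" and xu: "x \<noteq> u" and gi: "gstruct m (V1,E1)"
    and TT: "twoh V1 E1 V2 E2 M1 M2" for V1 E1 V2 E2 M1 M2 and x u :: 'a
  proof -
    interpret U: twoh V1 E1 V2 E2 M1 M2 by (rule TT)
    let ?H = "(V1 \<union> V2, E1 \<union> E2 \<union> M1 \<union> M2)"
    have c: "card (nb (V1,E1) x \<inter> nb (V1,E1) u) \<le> 2*m - 4" using gi x u xu unfolding gstruct_def verts_def by simp
    have "nb ?H x \<inter> nb ?H u \<subseteq> (nb (V1,E1) x \<inter> nb (V1,E1) u) \<union> U.cross x"
      using U.nb_step[OF x] U.nb_step[OF u] U.nb1_sub U.cross_card(1)[OF u] U.disj by blast
    moreover have "finite ((nb (V1,E1) x \<inter> nb (V1,E1) u) \<union> U.cross x)"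
      using U.nb1_sub U.fin1 finite_subset U.cross_card[OF x] by blast
    ultimately have "card (nb ?H x \<inter> nb ?H u) \<le> card ((nb (V1,E1) x \<inter> nb (V1,E1) u) \<union> U.cross x)"
      by (metis card_mono)
    also have "\<dots> \<le> card (nb (V1,E1) x \<inter> nb (V1,E1) u) + card (U.cross x)" by (rule card_Un_le)
    finally show ?thesis using c U.cross_card[OF x] m4 by simp
  qed
  have com2: "card (nb (V1 \<union> V2, E1 \<union> E2 \<union> M1 \<union> M2) x \<inter> nb (V1 \<union> V2, E1 \<union> E2 \<union> M1 \<union> M2) u) \<le> 2 * Suc m - 4"
    if x: "x \<in> V1" and u: "u \<in> V2" and TT: "twoh V1 E1 V2 E2 M1 M2" for V1 E1 V2 E2 M1 M2 and x u :: 'a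
  proof -
    interpret U: twoh V1 E1 V2 E2 M1 M2 by (rule TT)
    let ?H = "(V1 \<union> V2, E1 \<union> E2 \<union> M1 \<union> M2)"
    interpret W: twoh V2 E2 V1 E1 M1 M2 by (rule U.sym)
    have e: "(V2 \<union> V1, E2 \<union> E1 \<union> M1 \<union> M2) = ?H" by auto
    have "nb ?H x \<inter> nb ?H u \<subseteq> U.cross x \<union> W.cross u"
    proof -
      have A: "nb (V1,E1) x \<inter> nb (V2,E2) u = {}" using U.nb1_sub[of x] W.nb1_sub[of u] U.disj by blast
      have B: "nb ?H u = nb (V2,E2) u \<union> W.cross u" using W.nb_step[OF u] e by simp
      show ?thesis unfolding U.nb_step[OF x] B using A by blast
    qed
    moreover have "finite (U.cross x \<union> W.cross u)" using U.cross_card[OF x] W.cross_card[OF u] by blast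
    ultimately have "card (nb ?H x \<inter> nb ?H u) \<le> card (U.cross x \<union> W.cross u)" by (metis card_mono)
    also have "\<dots> \<le> card (U.cross x) + card (W.cross u)" by (rule card_Un_le)
    finally show ?thesis using U.cross_card[OF x] W.cross_card[OF u] m4 by simp
  qed
  have com: "\<forall>x\<in>verts ?G. \<forall>u\<in>verts ?G. x \<noteq> u \<longrightarrow> card (nb ?G x \<inter> nb ?G u) \<le> 2*(Suc m) - 4"
  proof (intro ballI impI)
    fix x u assume "x \<in> verts ?G" "u \<in> verts ?G" "x \<noteq> u"
    hence xs: "x \<in> V1 \<or> x \<in> V2" "u \<in> V1 \<or> u \<in> V2" by (auto simp: verts_def)
    show "card (nb ?G x \<inter> nb ?G u) \<le> 2*(Suc m) - 4"
    proof (cases "x \<in> V1")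
      case True
      show ?thesis
      proof (cases "u \<in> V1")
        case True thus ?thesis using com1[OF \<open>x\<in>V1\<close> _ \<open>x\<noteq>u\<close> g1 T.twoh_axioms] by blast
      next
        case False thus ?thesis using xs com2[OF \<open>x\<in>V1\<close> _ T.twoh_axioms] by blast
      qed
    next
      case False
      hence xV2: "x \<in> V2" using xs by blast
      show ?thesis
      proof (cases "u \<in> V2")
        case True thus ?thesis using com1[OF xV2 _ \<open>x\<noteq>u\<close> g2 S.twoh_axioms] eqG by simp
      next
        case False thus ?thesis using xs com2[OF xV2 _ S.twoh_axioms, of u] eqG by simp
      qed
    qed
  qed
  show ?thesis unfolding gstruct_def using m4 fin wf cV deg com by simp
qed

lemma gaq_struct: "gaq m G \<Longrightarrow> gstruct m G"
proof (induction rule: gaq.induct)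
  case (base f) thus ?case by (rule base_struct)
next
  case (step n V1 E1 V2 E2 M1 M2) thus ?case using step_struct by blast
qed

lemma verts_delete[simp]: "verts (delete G F) = verts G - fst F"
  by (simp add: delete_def verts_def)
lemma edges_delete[simp]: "edges (delete G F) = {e \<in> edges G - snd F. e \<inter> fst F = {}}"
  by (simp add: delete_def edges_def)
lemma verts_pair[simp]: "verts (V,E) = V" by (simp add: verts_def)
lemma edges_pair[simp]: "edges (V,E) = E" by (simp add: edges_def)

lemma wfeE: assumes "wfe V E" "e \<in> E"
  obtains u v where "u \<noteq> v" "u \<in> V" "v \<in> V" "e = {u,v}"
  using assms unfolding wfe_def by meson

lemma wfe_card2: "wfe V E \<Longrightarrow> e \<in> E \<Longrightarrow> card e = 2"
  unfolding wfe_def by fastforce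

lemma wfe_finE: "finite V \<Longrightarrow> wfe V E \<Longrightarrow> finite E"
proof -
  assume f: "finite V" and w: "wfe V E"
  have "E \<subseteq> Pow V"
  proof
    fix e assume "e \<in> E"
    then obtain u v where "u \<in> V" "v \<in> V" "e = {u,v}" using w unfolding wfe_def by meson
    thus "e \<in> Pow V" by simp
  qed
  thus "finite E" using f finite_Pow_iff finite_subset by metis
qed

lemma star_nb:
  assumes w: "wfe V E"
  shows "{e \<in> E. v \<in> e} = (\<lambda>w. {v,w}) ` {w. {v,w} \<in> E}"
proof
  show "{e \<in> E. v \<in> e} \<subseteq> (\<lambda>w. {v,w}) ` {w. {v,w} \<in> E}"
  proof
    fix e assume e: "e \<in> {e \<in> E. v \<in> e}"
    hence eE: "e \<in> E" and ve: "v \<in> e" by simp_all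
    obtain a b where ab: "e = {a,b}" using wfeE[OF w eE] by metis
    obtain c where c: "e = {v,c}"
    proof (cases "v = a")
      case True thus ?thesis using that ab by simp
    next
      case False hence "v = b" using ve ab by simp
      thus ?thesis using that[of a] ab by (simp add: insert_commute)
    qed
    have "c \<in> {w. {v,w} \<in> E}" using eE c by simp
    thus "e \<in> (\<lambda>w. {v,w}) ` {w. {v,w} \<in> E}" using c by (rule rev_image_eqI)
  qed
  show "(\<lambda>w. {v,w}) ` {w. {v,w} \<in> E} \<subseteq> {e \<in> E. v \<in> e}" by auto
qed

lemma card_star:
  assumes w: "wfe V E" and f: "finite V"
  shows "card {e \<in> E. v \<in> e} = card {w. {v,w} \<in> E}"
proof -
  have "inj_on (\<lambda>w. {v,w}) {w. {v,w} \<in> E}"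
    unfolding inj_on_def by (simp add: doubleton_eq_iff)
  hence "card ((\<lambda>w. {v,w}) ` {w. {v,w} \<in> E}) = card {w. {v,w} \<in> E}" by (rule card_image)
  thus ?thesis using star_nb[OF w, of v] by simp
qed

lemma gstruct_degree:
  assumes g: "gstruct m G" and v: "v \<in> verts G"
  shows "degree G v = 2*m - 1"
  using card_star[of "verts G" "edges G" v] g v unfolding gstruct_def degree_def nb_def by simp

lemma gstruct_min_degree:
  assumes g: "gstruct m G"
  shows "min_degree G = 2*m - 1"
proof -
  have ne: "verts G \<noteq> {}" using g unfolding gstruct_def by (metis card.empty power_not_zero zero_neq_numeral)
  have "degree G ` verts G = {2*m - 1}" using gstruct_degree[OF g] ne by auto
  thus ?thesis unfolding min_degree_def by simp
qed

lemma fssm_tool: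
  assumes s: "fractional_strongly_super_matched G" and d: "min_degree G = d"
    and F: "fault_set G F" and sz: "fsize F < d"
  shows "\<exists>f. fractional_perfect_matching (delete G F) f"
proof (rule ccontr)
  assume "\<not> ?thesis"
  hence "fsmp_set G F" using F unfolding fsmp_set_def by blast
  hence "\<exists>F'. fsmp_set G F' \<and> fsize F' = fsize F" by blast
  hence "fsmp G \<le> fsize F" unfolding fsmp_def by (rule Least_le)
  moreover have "fsmp G = d" using s d unfolding fractional_strongly_super_matched_def
      fractional_strongly_maximally_matched_def by simp
  ultimately show False using sz by simp
qed

lemma fssm_tool2:
  assumes s: "fractional_strongly_super_matched G" and d: "min_degree G = d"
    and F: "fault_set G F" and sz: "fsize F \<le> d" and ni: "\<not> has_isolated_vertex (delete G F)"
  shows "\<exists>f. fractional_perfect_matching (delete G F) f"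
proof (cases "fsize F < d")
  case True thus ?thesis using fssm_tool[OF s d F] by blast
next
  case False
  show ?thesis
  proof (rule ccontr)
    assume "\<not> ?thesis"
    hence fs: "fsmp_set G F" using F unfolding fsmp_set_def by blast
    have "fsmp G = d" using s d unfolding fractional_strongly_super_matched_def
      fractional_strongly_maximally_matched_def by simp
    hence "optimal_fsmp_set G F" using fs False sz unfolding optimal_fsmp_set_def by simp
    hence "has_isolated_vertex (delete G F)" using s unfolding fractional_strongly_super_matched_def by blast
    thus False using ni by blast
  qed
qed

lemma matching_card_union:
  assumes w: "wfe V E" and f: "finite V" and m: "matching (delete (V,E) F) M"
  shows "card (\<Union>M) = 2 * card M"
proof -
  have ME: "M \<subseteq> E" using m unfolding matching_def by auto
  have finM: "finite M" using wfe_finE[OF f w] ME finite_subset by blast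
  have pw: "pairwise disjnt M" using m unfolding matching_def pairwise_def disjnt_def by blast
  have fe: "\<And>e. e \<in> M \<Longrightarrow> finite e" using ME wfe_card2[OF w] card_ge_0_finite by fastforce
  have "card (\<Union>M) = sum card M" by (rule card_Union_disjoint[OF pw fe])
  also have "\<dots> = sum (\<lambda>_. 2) M" using ME wfe_card2[OF w] by (intro sum.cong) auto
  finally show ?thesis by simp
qed

lemma essm_tool:
  assumes s: "even_strongly_super_matched G" and d: "min_degree G = d"
    and f: "finite (verts G)" and w: "wfe (verts G) (edges G)" and ev: "even (card (verts G))"
    and F: "fault_set G F" and sz: "fsize F < d" and evF: "even (card (fst F))"
  shows "\<exists>M. perfect_matching (delete G F) M"
proof (rule ccontr)
  assume npm: "\<not> ?thesis"
  have "smp G = d" using s d unfolding even_strongly_super_matched_def strongly_maximally_matched_def by simp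
  have "\<not> smp_set G F"
  proof
    assume "smp_set G F"
    hence "\<exists>F'. smp_set G F' \<and> fsize F' = fsize F" by blast
    hence "smp G \<le> fsize F" unfolding smp_def by (rule Least_le)
    thus False using \<open>smp G = d\<close> sz by simp
  qed
  then obtain M where apm: "almost_perfect_matching (delete G F) M" using npm F unfolding smp_set_def by blast
  then obtain v where v: "v \<in> verts G - fst F" "\<Union>M = verts G - fst F - {v}"
    unfolding almost_perfect_matching_def by auto
  have m: "matching (delete (verts G, edges G) F) M" using apm unfolding almost_perfect_matching_def
    by (simp add: verts_def edges_def)
  have c1: "card (\<Union>M) = 2 * card M" by (rule matching_card_union[OF w f m])
  have Fs: "fst F \<subseteq> verts G" using F unfolding fault_set_def by simp
  have ffin: "finite (fst F)" using Fs f finite_subset by blast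
  have "card (\<Union>M) = card (verts G - fst F) - 1" using v f by (simp add: card_Diff_singleton)
  also have "card (verts G - fst F) = card (verts G) - card (fst F)" using Fs ffin by (simp add: card_Diff_subset)
  finally have "card (\<Union>M) = card (verts G) - card (fst F) - 1" .
  moreover have "card (verts G - fst F) > 0" using v f by (metis card_gt_0_iff empty_iff finite_Diff)
  moreover have "card (fst F) \<le> card (verts G)" using Fs f card_mono by blast
  ultimately have X: "2 * card M = (card (verts G) - card (fst F)) - 1" "card (verts G) - card (fst F) > 0"
    "card (fst F) \<le> card (verts G)"
    using c1 \<open>card (verts G - fst F) = card (verts G) - card (fst F)\<close> by simp_all
  have "even (card (verts G) - card (fst F))" using ev evF X(3) by simp
  then obtain k where "card (verts G) - card (fst F) = 2 * k" by (elim evenE)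
  thus False using X(1,2) by presburger
qed

context twoh begin

definition EH1 :: "'a set \<Rightarrow> 'a set set \<Rightarrow> 'a set set" where
  "EH1 Vf Ef = {e \<in> E1 - Ef. e \<inter> Vf = {}}"
definition EH2 :: "'a set \<Rightarrow> 'a set set \<Rightarrow> 'a set set" where
  "EH2 Vf Ef = {e \<in> E2 - Ef. e \<inter> Vf = {}}"

lemma EH1_eq: "edges (delete (V1,E1) (Vf \<inter> V1, Ef \<inter> E1)) = EH1 Vf Ef"
  unfolding EH1_def using E1sub by auto
lemma EH2_eq: "edges (delete (V2,E2) (Vf \<inter> V2, Ef \<inter> E2)) = EH2 Vf Ef"
  unfolding EH2_def using E2sub by auto

lemma finE1: "finite E1" using wfe_finE[OF fin1 wf1] .
lemma finE2: "finite E2" using wfe_finE[OF fin2 wf2] .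
lemma finM: "finite (M1 \<union> M2)"
proof -
  have "M1 \<union> M2 \<subseteq> Pow (V1 \<union> V2)" using Medge by blast
  thus ?thesis using fin1 fin2 finite_subset by blast
qed

lemma cross_eq: assumes "w \<in> V1" "w' \<in> V1" "s \<in> V2" "s' \<in> V2" "{w,s} = {w',s'}" shows "w = w'"
  using assms disj by (auto simp: doubleton_eq_iff)

lemma UCT:
  fixes g k :: "'a set \<Rightarrow> real" and d :: "'a \<Rightarrow> real" and \<sigma> :: "'a \<Rightarrow> 'a"
  assumes D: "D \<subseteq> V1 - Vf" "finite D"
  and sg: "\<forall>w\<in>D. \<sigma> w \<in> V2 - Vf \<and> {w, \<sigma> w} \<in> (M1 \<union> M2) - Ef"
  and d: "\<forall>w\<in>D. 0 \<le> d w \<and> d w \<le> 1"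
  and g1: "\<forall>e\<in>EH1 Vf Ef. 0 \<le> g e \<and> g e \<le> 1"
  and g2: "\<forall>w\<in>V1 - Vf. (\<Sum>e\<in>{e \<in> EH1 Vf Ef. w\<in>e}. g e) = 1 - (if w \<in> D then d w else 0)"
  and k1: "\<forall>e\<in>EH2 Vf Ef. 0 \<le> k e \<and> k e \<le> 1"
  and k2: "\<forall>v\<in>V2 - Vf. (\<Sum>e\<in>{e \<in> EH2 Vf Ef. v\<in>e}. k e) = 1 - (\<Sum>w\<in>{w\<in>D. \<sigma> w = v}. d w)"
  shows "\<exists>f. fractional_perfect_matching (delete (V1 \<union> V2, E1 \<union> E2 \<union> M1 \<union> M2) (Vf,Ef)) f"
proof -
  define c where "c e = (\<Sum>w\<in>D. if e = {w, \<sigma> w} then d w else 0)" for e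
  define f where "f e = (if e \<in> E1 then g e else if e \<in> E2 then k e else c e)" for e
  let ?EH = "edges (delete (V1 \<union> V2, E1 \<union> E2 \<union> M1 \<union> M2) (Vf,Ef))"
  let ?A3 = "\<lambda>x. {e \<in> (M1 \<union> M2) - Ef. e \<inter> Vf = {} \<and> x \<in> e}"
  have EH: "?EH = {e \<in> (E1 \<union> E2 \<union> M1 \<union> M2) - Ef. e \<inter> Vf = {}}" by simp
  have finEH: "finite ?EH" using finE1 finE2 finM by simp
  have c_cross: "c {w0, \<sigma> w0} = d w0" if w0: "w0 \<in> D" for w0
  proof -
    have "c {w0, \<sigma> w0} = (\<Sum>w\<in>D. if w = w0 then d w else 0)"
      unfolding c_def
    proof (rule sum.cong)
      fix w assume w: "w \<in> D"
      have "{w0, \<sigma> w0} = {w, \<sigma> w} \<longleftrightarrow> w = w0"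
        using cross_eq[of w0 w "\<sigma> w0" "\<sigma> w"] w w0 D sg by auto
      thus "(if {w0, \<sigma> w0} = {w, \<sigma> w} then d w else 0) = (if w = w0 then d w else 0)" by simp
    qed simp
    also have "\<dots> = d w0" using w0 D(2) by simp
    finally show ?thesis .
  qed
  have c_other: "c e = 0" if "\<forall>w\<in>D. e \<noteq> {w, \<sigma> w}" for e
    unfolding c_def using that by simp
  have cA: "(\<Sum>e\<in>?A3 x. c e) = (\<Sum>w\<in>D. if x \<in> {w, \<sigma> w} then d w else 0)" for x
  proof -
    have fA: "finite (?A3 x)" using finM by simp
    have "(\<Sum>e\<in>?A3 x. c e) = (\<Sum>w\<in>D. \<Sum>e\<in>?A3 x. if e = {w, \<sigma> w} then d w else 0)"
      unfolding c_def by (rule sum.swap)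
    also have "\<dots> = (\<Sum>w\<in>D. if {w, \<sigma> w} \<in> ?A3 x then d w else 0)"
      by (rule sum.cong[OF refl], rule sum.delta[OF fA])
    also have "\<dots> = (\<Sum>w\<in>D. if x \<in> {w, \<sigma> w} then d w else 0)"
    proof (rule sum.cong[OF refl])
      fix w assume w: "w \<in> D"
      have "{w, \<sigma> w} \<in> (M1 \<union> M2) - Ef" "{w, \<sigma> w} \<inter> Vf = {}" using sg w D by auto
      thus "(if {w, \<sigma> w} \<in> ?A3 x then d w else 0) = (if x \<in> {w, \<sigma> w} then d w else 0)" by simp
    qed
    finally show ?thesis .
  qed
  have fpm_sum: "(\<Sum>e\<in>{e \<in> ?EH. x \<in> e}. f e) = 1" if x: "x \<in> (V1 \<union> V2) - Vf" for x
  proof (cases "x \<in> V1")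
    case True
    have xV2: "x \<notin> V2" using True disj by blast
    have split: "{e \<in> ?EH. x \<in> e} = {e \<in> EH1 Vf Ef. x\<in>e} \<union> ?A3 x"
      unfolding EH EH1_def using E2sub xV2 by auto
    have dj: "{e \<in> EH1 Vf Ef. x\<in>e} \<inter> ?A3 x = {}" unfolding EH1_def using M_not_E1 by blast
    have f1: "finite {e \<in> EH1 Vf Ef. x\<in>e}" using finE1 unfolding EH1_def by simp
    have f3: "finite (?A3 x)" using finM by simp
    have "(\<Sum>e\<in>{e \<in> ?EH. x \<in> e}. f e) = (\<Sum>e\<in>{e \<in> EH1 Vf Ef. x\<in>e}. f e) + (\<Sum>e\<in>?A3 x. f e)"
      unfolding split by (rule sum.union_disjoint[OF f1 f3 dj])
    also have "(\<Sum>e\<in>{e \<in> EH1 Vf Ef. x\<in>e}. f e) = (\<Sum>e\<in>{e \<in> EH1 Vf Ef. x\<in>e}. g e)"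
      unfolding f_def EH1_def by (rule sum.cong) auto
    also have "(\<Sum>e\<in>?A3 x. f e) = (\<Sum>e\<in>?A3 x. c e)"
      unfolding f_def using M_not_E1 M_not_E2 by (intro sum.cong) auto
    also have "\<dots> = (\<Sum>w\<in>D. if w = x then d w else 0)"
    proof -
      have "\<And>w. w \<in> D \<Longrightarrow> (x \<in> {w, \<sigma> w}) = (w = x)" using sg D True disj by auto
      thus ?thesis unfolding cA by (intro sum.cong) auto
    qed
    also have "\<dots> = (if x \<in> D then d x else 0)" using D(2) by (simp add: sum.delta')
    finally show ?thesis using g2 True x by simp
  next
    case False
    hence xV2: "x \<in> V2" "x \<notin> V1" using x by auto
    have split: "{e \<in> ?EH. x \<in> e} = {e \<in> EH2 Vf Ef. x\<in>e} \<union> ?A3 x"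
      unfolding EH EH2_def using E1sub xV2 by auto
    have dj: "{e \<in> EH2 Vf Ef. x\<in>e} \<inter> ?A3 x = {}" unfolding EH2_def using M_not_E2 by blast
    have f1: "finite {e \<in> EH2 Vf Ef. x\<in>e}" using finE2 unfolding EH2_def by simp
    have f3: "finite (?A3 x)" using finM by simp
    have "(\<Sum>e\<in>{e \<in> ?EH. x \<in> e}. f e) = (\<Sum>e\<in>{e \<in> EH2 Vf Ef. x\<in>e}. f e) + (\<Sum>e\<in>?A3 x. f e)"
      unfolding split by (rule sum.union_disjoint[OF f1 f3 dj])
    also have "(\<Sum>e\<in>{e \<in> EH2 Vf Ef. x\<in>e}. f e) = (\<Sum>e\<in>{e \<in> EH2 Vf Ef. x\<in>e}. k e)"
      unfolding f_def EH2_def using E12 by (intro sum.cong) auto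
    also have "(\<Sum>e\<in>?A3 x. f e) = (\<Sum>e\<in>?A3 x. c e)"
      unfolding f_def using M_not_E1 M_not_E2 by (intro sum.cong) auto
    also have "\<dots> = (\<Sum>w\<in>D. if \<sigma> w = x then d w else 0)"
    proof -
      have "\<And>w. w \<in> D \<Longrightarrow> (x \<in> {w, \<sigma> w}) = (\<sigma> w = x)" using D xV2 by auto
      thus ?thesis unfolding cA by (intro sum.cong) auto
    qed
    also have "\<dots> = (\<Sum>w\<in>{w\<in>D. \<sigma> w = x}. d w)" using D(2) by (simp add: sum.inter_filter)
    finally show ?thesis using k2 xV2 x by simp
  qed
  have fpm_bnd: "0 \<le> f e \<and> f e \<le> 1" if e: "e \<in> ?EH" for e
  proof (cases "e \<in> E1")
    case True thus ?thesis using e g1 unfolding f_def EH1_def by auto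
  next
    case False
    show ?thesis
    proof (cases "e \<in> E2")
      case True thus ?thesis using e k1 False unfolding f_def EH2_def by auto
    next
      case False2: False
      hence fe: "f e = c e" using False unfolding f_def by simp
      show ?thesis
      proof (cases "\<exists>w\<in>D. e = {w, \<sigma> w}")
        case True
        then obtain w where "w \<in> D" "e = {w, \<sigma> w}" by blast
        thus ?thesis using fe c_cross d by auto
      next
        case False thus ?thesis using fe c_other by auto
      qed
    qed
  qed
  have "fractional_perfect_matching (delete (V1 \<union> V2, E1 \<union> E2 \<union> M1 \<union> M2) (Vf,Ef)) f"
    unfolding fractional_perfect_matching_def using fpm_sum fpm_bnd by simp
  thus ?thesis by blast
qed

end

lemma absorb:
  fixes lam :: "'i \<Rightarrow> real" and Y :: "'i \<Rightarrow> 'a set"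
  assumes finE: "finite E"
  and P: "\<And>Z. Z \<subseteq> V - A \<Longrightarrow> card Z \<le> s \<Longrightarrow> \<exists>h. fractional_perfect_matching (delete (V,E) (A \<union> Z, B)) h"
  and I: "finite I" and lam: "\<forall>i\<in>I. 0 \<le> lam i" "sum lam I \<le> 1"
  and Ys: "\<forall>i\<in>I. Y i \<subseteq> V - A \<and> card (Y i) \<le> s"
  shows "\<exists>k. (\<forall>e\<in>{e \<in> E - B. e \<inter> A = {}}. 0 \<le> k e \<and> k e \<le> 1) \<and>
     (\<forall>v\<in>V - A. (\<Sum>e\<in>{e \<in> {e \<in> E - B. e \<inter> A = {}}. v \<in> e}. k e) = 1 - (\<Sum>i\<in>{i\<in>I. v \<in> Y i}. lam i))"
proof -
  let ?EH = "{e \<in> E - B. e \<inter> A = {}}"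
  define h where "h Z = (SOME h. fractional_perfect_matching (delete (V,E) (A \<union> Z, B)) h)" for Z
  define hz where "hz Z e = (if e \<inter> Z = {} then h Z e else 0)" for Z e
  have hfpm: "fractional_perfect_matching (delete (V,E) (A \<union> Z, B)) (h Z)"
    if "Z \<subseteq> V - A" "card Z \<le> s" for Z
    unfolding h_def using P[OF that] by (rule someI_ex)
  have hz_bnd: "0 \<le> hz Z e \<and> hz Z e \<le> 1" if "Z \<subseteq> V - A" "card Z \<le> s" "e \<in> ?EH" for Z e
  proof (cases "e \<inter> Z = {}")
    case True
    hence "e \<in> edges (delete (V,E) (A \<union> Z, B))" using that by auto
    thus ?thesis using hfpm[OF that(1,2)] True unfolding hz_def fractional_perfect_matching_def by auto
  qed (simp add: hz_def)
  have T: "(\<Sum>e\<in>{e \<in> ?EH. v \<in> e}. hz Z e) = (if v \<in> Z then 0 else 1)"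
    if Z: "Z \<subseteq> V - A" "card Z \<le> s" and v: "v \<in> V - A" for Z v
  proof (cases "v \<in> Z")
    case True
    hence "\<And>e. e \<in> {e \<in> ?EH. v \<in> e} \<Longrightarrow> hz Z e = 0" unfolding hz_def by auto
    thus ?thesis using True by simp
  next
    case False
    have fin: "finite {e \<in> ?EH. v \<in> e}" using finE by simp
    have "(\<Sum>e\<in>{e \<in> ?EH. v \<in> e}. hz Z e) = (\<Sum>e\<in>{e \<in> ?EH. v \<in> e} \<inter> {e. e \<inter> Z = {}}. h Z e)"
      unfolding hz_def using fin by (simp add: sum.inter_restrict)
    also have "{e \<in> ?EH. v \<in> e} \<inter> {e. e \<inter> Z = {}} = {e \<in> edges (delete (V,E) (A \<union> Z, B)). v \<in> e}"
      by auto
    also have "(\<Sum>e\<in>{e \<in> edges (delete (V,E) (A \<union> Z, B)). v \<in> e}. h Z e) = 1"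
      using hfpm[OF Z] v False unfolding fractional_perfect_matching_def by auto
    finally show ?thesis using False by simp
  qed
  define k where "k e = (\<Sum>i\<in>I. lam i * hz (Y i) e) + (1 - sum lam I) * hz {} e" for e
  have k_bnd: "0 \<le> k e \<and> k e \<le> 1" if e: "e \<in> ?EH" for e
  proof -
    have b: "\<And>i. i \<in> I \<Longrightarrow> 0 \<le> hz (Y i) e \<and> hz (Y i) e \<le> 1" using hz_bnd Ys e by blast
    have b0: "0 \<le> hz {} e \<and> hz {} e \<le> 1" using hz_bnd[of "{}"] e by simp
    have "0 \<le> (\<Sum>i\<in>I. lam i * hz (Y i) e)" using b lam by (intro sum_nonneg) simp
    moreover have "(\<Sum>i\<in>I. lam i * hz (Y i) e) \<le> (\<Sum>i\<in>I. lam i)"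
      using b lam by (intro sum_mono) (simp add: mult_left_le)
    moreover have "0 \<le> (1 - sum lam I) * hz {} e" using b0 lam by simp
    moreover have "(1 - sum lam I) * hz {} e \<le> 1 - sum lam I" using b0 lam by (simp add: mult_left_le)
    ultimately show ?thesis unfolding k_def by linarith
  qed
  have k_sum: "(\<Sum>e\<in>{e \<in> ?EH. v \<in> e}. k e) = 1 - (\<Sum>i\<in>{i\<in>I. v \<in> Y i}. lam i)" if v: "v \<in> V - A" for v
  proof -
    have "(\<Sum>e\<in>{e \<in> ?EH. v \<in> e}. k e) =
      (\<Sum>i\<in>I. lam i * (\<Sum>e\<in>{e \<in> ?EH. v \<in> e}. hz (Y i) e)) + (1 - sum lam I) * (\<Sum>e\<in>{e \<in> ?EH. v \<in> e}. hz {} e)"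
      unfolding k_def by (simp add: sum.distrib sum_distrib_left sum.swap[of _ I])
    also have "\<dots> = (\<Sum>i\<in>I. lam i * (if v \<in> Y i then 0 else 1)) + (1 - sum lam I)"
      using T[of "{}" v] v T Ys by simp
    also have "(\<Sum>i\<in>I. lam i * (if v \<in> Y i then 0 else 1)) = sum lam I - (\<Sum>i\<in>{i\<in>I. v \<in> Y i}. lam i)"
    proof -
      have "(\<Sum>i\<in>I. lam i * (if v \<in> Y i then 0 else 1)) = (\<Sum>i\<in>I. lam i) - (\<Sum>i\<in>I. if v \<in> Y i then lam i else 0)"
        by (simp add: sum_subtractf[symmetric]) (rule sum.cong, auto)
      also have "(\<Sum>i\<in>I. if v \<in> Y i then lam i else 0) = (\<Sum>i\<in>{i\<in>I. v \<in> Y i}. lam i)"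
        using I by (simp add: sum.inter_filter)
      finally show ?thesis .
    qed
    finally show ?thesis by simp
  qed
  show ?thesis using k_bnd k_sum by blast
qed

locale mainc = twoh +
  fixes n :: nat
  assumes n5: "n \<ge> 5"
  and g1: "gstruct (n-1) (V1,E1)" and g2: "gstruct (n-1) (V2,E2)"
  and es1: "even_strongly_super_matched (V1,E1)" and es2: "even_strongly_super_matched (V2,E2)"
  and fs1: "fractional_strongly_super_matched (V1,E1)" and fs2: "fractional_strongly_super_matched (V2,E2)"
begin

lemma md1: "min_degree (V1,E1) = 2*n - 3" using gstruct_min_degree[OF g1] n5 by simp
lemma md2: "min_degree (V2,E2) = 2*n - 3" using gstruct_min_degree[OF g2] n5 by simp

lemma T1: assumes "A \<subseteq> V1" "B \<subseteq> E1" "card A + card B < 2*n - 3"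
  shows "\<exists>f. fractional_perfect_matching (delete (V1,E1) (A,B)) f"
  using fssm_tool[OF fs1 md1, of "(A,B)"] assms unfolding fault_set_def fsize_def by simp

lemma T2: assumes "A \<subseteq> V1" "B \<subseteq> E1" "card A + card B \<le> 2*n - 3"
    "\<not> has_isolated_vertex (delete (V1,E1) (A,B))"
  shows "\<exists>f. fractional_perfect_matching (delete (V1,E1) (A,B)) f"
  using fssm_tool2[OF fs1 md1, of "(A,B)"] assms unfolding fault_set_def fsize_def by simp

lemma T3: assumes "A \<subseteq> V1" "B \<subseteq> E1" "card A + card B < 2*n - 3" "even (card A)"
  shows "\<exists>M. perfect_matching (delete (V1,E1) (A,B)) M"
proof -
  have "even (card V1)" using g1 n5 unfolding gstruct_def by simp
  thus ?thesis
    using essm_tool[OF es1 md1, of "(A,B)"] assms fin1 wf1 unfolding fault_set_def fsize_def by simp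
qed

lemma T1b: assumes "A \<subseteq> V2" "B \<subseteq> E2" "card A + card B < 2*n - 3"
  shows "\<exists>f. fractional_perfect_matching (delete (V2,E2) (A,B)) f"
  using fssm_tool[OF fs2 md2, of "(A,B)"] assms unfolding fault_set_def fsize_def by simp

lemma finV1: "finite (Vf \<inter> V1)" using fin1 by simp
lemma finV2: "finite (Vf \<inter> V2)" using fin2 by simp
lemma finEf1: "finite (Ef \<inter> E1)" using finE1 by simp
lemma finEf2: "finite (Ef \<inter> E2)" using finE2 by simp

lemma half2_P:
  assumes sz: "card (Vf \<inter> V2) + card (Ef \<inter> E2) + s \<le> 2*n - 4"
  and Z: "Z \<subseteq> V2 - (Vf \<inter> V2)" "card Z \<le> s"
  shows "\<exists>h. fractional_perfect_matching (delete (V2,E2) ((Vf \<inter> V2) \<union> Z, Ef \<inter> E2)) h"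
proof -
  have "card ((Vf \<inter> V2) \<union> Z) \<le> card (Vf \<inter> V2) + card Z" by (rule card_Un_le)
  hence "card ((Vf \<inter> V2) \<union> Z) + card (Ef \<inter> E2) < 2*n - 3" using sz Z n5 by linarith
  moreover have "(Vf \<inter> V2) \<union> Z \<subseteq> V2" "Ef \<inter> E2 \<subseteq> E2" using Z by auto
  ultimately show ?thesis using T1b by blast
qed

lemma export_family:
  fixes g :: "'a set \<Rightarrow> real" and d :: "'a \<Rightarrow> real"
  assumes sz: "card (Vf \<inter> V2) + card (Ef \<inter> E2) + 1 \<le> 2*n - 4"
  and D: "D \<subseteq> V1 - Vf" "finite D"
  and sg: "\<forall>w\<in>D. \<sigma> w \<in> V2 - Vf \<and> {w, \<sigma> w} \<in> (M1 \<union> M2) - Ef"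
  and d: "\<forall>w\<in>D. 0 \<le> d w \<and> d w \<le> 1" "sum d D \<le> 1"
  and gb: "\<forall>e\<in>EH1 Vf Ef. 0 \<le> g e \<and> g e \<le> 1"
  and gs: "\<forall>w\<in>V1 - Vf. (\<Sum>e\<in>{e \<in> EH1 Vf Ef. w\<in>e}. g e) = 1 - (if w \<in> D then d w else 0)"
  shows "\<exists>f. fractional_perfect_matching (delete (V1 \<union> V2, E1 \<union> E2 \<union> M1 \<union> M2) (Vf,Ef)) f"
proof -
  have "\<exists>k. (\<forall>e\<in>{e \<in> E2 - (Ef \<inter> E2). e \<inter> (Vf \<inter> V2) = {}}. 0 \<le> k e \<and> k e \<le> 1) \<and>
     (\<forall>v\<in>V2 - (Vf \<inter> V2). (\<Sum>e\<in>{e \<in> {e \<in> E2 - (Ef \<inter> E2). e \<inter> (Vf \<inter> V2) = {}}. v \<in> e}. k e)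
        = 1 - (\<Sum>i\<in>{i\<in>D. v \<in> {\<sigma> i}}. d i))"
    by (rule absorb[OF finE2 half2_P[OF sz] D(2)]) (use d sg in auto)
  then obtain k where k1: "\<forall>e\<in>{e \<in> E2 - (Ef \<inter> E2). e \<inter> (Vf \<inter> V2) = {}}. 0 \<le> k e \<and> k e \<le> 1"
    and k2: "\<forall>v\<in>V2 - (Vf \<inter> V2). (\<Sum>e\<in>{e \<in> {e \<in> E2 - (Ef \<inter> E2). e \<inter> (Vf \<inter> V2) = {}}. v \<in> e}. k e)
        = 1 - (\<Sum>i\<in>{i\<in>D. v \<in> {\<sigma> i}}. d i)" by blast
  have eq: "{e \<in> E2 - (Ef \<inter> E2). e \<inter> (Vf \<inter> V2) = {}} = EH2 Vf Ef"
    unfolding EH2_def using E2sub by auto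
  have eq2: "\<And>v. {i\<in>D. v \<in> {\<sigma> i}} = {w\<in>D. \<sigma> w = v}" by auto
  have v2: "V2 - Vf \<inter> V2 = V2 - Vf" by auto
  have k1': "\<forall>e\<in>EH2 Vf Ef. 0 \<le> k e \<and> k e \<le> 1" using k1[unfolded eq] .
  have k2': "\<forall>v\<in>V2 - Vf. (\<Sum>e\<in>{e \<in> EH2 Vf Ef. v\<in>e}. k e) = 1 - (\<Sum>w\<in>{w\<in>D. \<sigma> w = v}. d w)"
    using k2[unfolded eq eq2 v2] .
  show ?thesis by (rule UCT[OF D sg d(1) gb gs k1' k2'])
qed

lemma export_single:
  fixes g :: "'a set \<Rightarrow> real" and t :: real
  assumes D: "D \<subseteq> V1 - Vf" "finite D"
  and sz: "card (Vf \<inter> V2) + card (Ef \<inter> E2) + card D \<le> 2*n - 4"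
  and sg: "\<forall>w\<in>D. \<sigma> w \<in> V2 - Vf \<and> {w, \<sigma> w} \<in> (M1 \<union> M2) - Ef" and inj: "inj_on \<sigma> D"
  and t: "0 \<le> t" "t \<le> 1"
  and gb: "\<forall>e\<in>EH1 Vf Ef. 0 \<le> g e \<and> g e \<le> 1"
  and gs: "\<forall>w\<in>V1 - Vf. (\<Sum>e\<in>{e \<in> EH1 Vf Ef. w\<in>e}. g e) = 1 - (if w \<in> D then t else 0)"
  shows "\<exists>f. fractional_perfect_matching (delete (V1 \<union> V2, E1 \<union> E2 \<union> M1 \<union> M2) (Vf,Ef)) f"
proof -
  have Y: "\<sigma> ` D \<subseteq> V2 - (Vf \<inter> V2)" "card (\<sigma> ` D) \<le> card D" using sg card_image_le[OF D(2)] by auto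
  have "\<exists>k. (\<forall>e\<in>{e \<in> E2 - (Ef \<inter> E2). e \<inter> (Vf \<inter> V2) = {}}. 0 \<le> k e \<and> k e \<le> 1) \<and>
     (\<forall>v\<in>V2 - (Vf \<inter> V2). (\<Sum>e\<in>{e \<in> {e \<in> E2 - (Ef \<inter> E2). e \<inter> (Vf \<inter> V2) = {}}. v \<in> e}. k e)
        = 1 - (\<Sum>i\<in>{i\<in>{()}. v \<in> \<sigma> ` D}. t))"
    by (rule absorb[OF finE2 half2_P[OF sz]]) (use t Y in auto)
  then obtain k where k1: "\<forall>e\<in>{e \<in> E2 - (Ef \<inter> E2). e \<inter> (Vf \<inter> V2) = {}}. 0 \<le> k e \<and> k e \<le> 1"
    and k2: "\<forall>v\<in>V2 - (Vf \<inter> V2). (\<Sum>e\<in>{e \<in> {e \<in> E2 - (Ef \<inter> E2). e \<inter> (Vf \<inter> V2) = {}}. v \<in> e}. k e)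
        = 1 - (\<Sum>i\<in>{i\<in>{()}. v \<in> \<sigma> ` D}. t)" by blast
  have eq: "{e \<in> E2 - (Ef \<inter> E2). e \<inter> (Vf \<inter> V2) = {}} = EH2 Vf Ef"
    unfolding EH2_def using E2sub by auto
  have s1: "(\<Sum>i\<in>{i\<in>{()}. v \<in> \<sigma> ` D}. t) = (\<Sum>w\<in>{w\<in>D. \<sigma> w = v}. (\<lambda>_. t) w)" for v
  proof (cases "v \<in> \<sigma> ` D")
    case True
    then obtain w0 where w0: "w0 \<in> D" "v = \<sigma> w0" by blast
    have "{w\<in>D. \<sigma> w = v} = {w0}" using w0 inj unfolding inj_on_def by auto
    moreover have "{i\<in>{()}. v \<in> \<sigma> ` D} = {()}" using True by auto
    ultimately show ?thesis by simp
  next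
    case False
    hence "{w\<in>D. \<sigma> w = v} = {}" by auto
    moreover have "{i\<in>{()}. v \<in> \<sigma> ` D} = {}" using False by auto
    ultimately show ?thesis by (simp only: sum.empty)
  qed
  have v2: "V2 - Vf \<inter> V2 = V2 - Vf" by auto
  have k1': "\<forall>e\<in>EH2 Vf Ef. 0 \<le> k e \<and> k e \<le> 1" using k1[unfolded eq] .
  have k2': "\<forall>v\<in>V2 - Vf. (\<Sum>e\<in>{e \<in> EH2 Vf Ef. v\<in>e}. k e) = 1 - (\<Sum>w\<in>{w\<in>D. \<sigma> w = v}. (\<lambda>_. t) w)"
    using k2[unfolded eq s1 v2] .
  have d': "\<forall>w\<in>D. 0 \<le> (\<lambda>_. t) w \<and> (\<lambda>_. t) w \<le> 1" using t by simp
  have gs': "\<forall>w\<in>V1 - Vf. (\<Sum>e\<in>{e \<in> EH1 Vf Ef. w\<in>e}. g e) = 1 - (if w \<in> D then (\<lambda>_. t) w else 0)"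
    using gs by simp
  show ?thesis by (rule UCT[OF D sg d' gb gs' k1' k2'])
qed

lemma export_none:
  assumes "\<exists>g. fractional_perfect_matching (delete (V1,E1) (Vf \<inter> V1, Ef \<inter> E1)) g"
    and "\<exists>k. fractional_perfect_matching (delete (V2,E2) (Vf \<inter> V2, Ef \<inter> E2)) k"
  shows "\<exists>f. fractional_perfect_matching (delete (V1 \<union> V2, E1 \<union> E2 \<union> M1 \<union> M2) (Vf,Ef)) f"
proof -
  obtain g where g: "fractional_perfect_matching (delete (V1,E1) (Vf \<inter> V1, Ef \<inter> E1)) g" using assms by blast
  obtain k where k: "fractional_perfect_matching (delete (V2,E2) (Vf \<inter> V2, Ef \<inter> E2)) k" using assms by blast
  have g1: "\<forall>e\<in>EH1 Vf Ef. 0 \<le> g e \<and> g e \<le> 1"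
    using g unfolding fractional_perfect_matching_def EH1_eq by blast
  have g2: "\<forall>w\<in>V1 - Vf. (\<Sum>e\<in>{e \<in> EH1 Vf Ef. w\<in>e}. g e) = 1 - (if w \<in> {} then d w else 0)"
  proof
    fix w assume "w \<in> V1 - Vf"
    hence "w \<in> verts (delete (V1,E1) (Vf \<inter> V1, Ef \<inter> E1))" by simp
    hence "(\<Sum>e\<in>{e \<in> EH1 Vf Ef. w\<in>e}. g e) = 1"
      using g unfolding fractional_perfect_matching_def EH1_eq by blast
    thus "(\<Sum>e\<in>{e \<in> EH1 Vf Ef. w\<in>e}. g e) = 1 - (if w \<in> {} then d w else 0)" by simp
  qed
  have k1: "\<forall>e\<in>EH2 Vf Ef. 0 \<le> k e \<and> k e \<le> 1"
    using k unfolding fractional_perfect_matching_def EH2_eq by blast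
  have k2: "\<forall>v\<in>V2 - Vf. (\<Sum>e\<in>{e \<in> EH2 Vf Ef. v\<in>e}. k e) = 1 - (\<Sum>w\<in>{w\<in>{}. \<sigma> w = v}. d w)"
  proof
    fix w assume "w \<in> V2 - Vf"
    hence "w \<in> verts (delete (V2,E2) (Vf \<inter> V2, Ef \<inter> E2))" by simp
    hence "(\<Sum>e\<in>{e \<in> EH2 Vf Ef. w\<in>e}. k e) = 1"
      using k unfolding fractional_perfect_matching_def EH2_eq by blast
    thus "(\<Sum>e\<in>{e \<in> EH2 Vf Ef. w\<in>e}. k e) = 1 - (\<Sum>w'\<in>{w'\<in>{}. \<sigma> w' = w}. d w')" by simp
  qed
  show ?thesis by (rule UCT[OF _ _ _ _ g1 g2 k1 k2]) auto
qed

end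

lemma two_set: assumes "wfe V E" "e \<in> E" "x \<in> e" "z \<in> e" "x \<noteq> z" shows "e = {x,z}"
proof -
  obtain u v where "e = {u,v}" using wfeE[OF assms(1,2)] by metis
  thus ?thesis using assms(3-5) by auto
qed

context mainc begin

abbreviation "G \<equiv> (V1 \<union> V2, E1 \<union> E2 \<union> M1 \<union> M2)"

lemma nb1_card: "x \<in> V1 \<Longrightarrow> card (nb (V1,E1) x) = 2*n - 3"
  using g1 n5 unfolding gstruct_def by simp
lemma nb1_common: assumes "x \<in> V1" "u \<in> V1" "x \<noteq> u" shows "card (nb (V1,E1) x \<inter> nb (V1,E1) u) \<le> 2*n - 6"
proof -
  have "card (nb (V1,E1) x \<inter> nb (V1,E1) u) \<le> 2*(n-1) - 4" using g1 assms unfolding gstruct_def by simp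
  moreover have "2*(n-1) - 4 = 2*n - 6" using n5 by simp
  ultimately show ?thesis by simp
qed
lemma nb1_fin: "finite (nb (V1,E1) x)" using nb1_sub fin1 finite_subset by blast
lemma star1_card: "x \<in> V1 \<Longrightarrow> card {e \<in> E1. x \<in> e} = 2*n - 3"
  using card_star[OF wf1 fin1, of x] nb1_card unfolding nb_def by simp

lemma E1_2: "e \<in> E1 \<Longrightarrow> x \<in> e \<Longrightarrow> z \<in> e \<Longrightarrow> x \<noteq> z \<Longrightarrow> e = {x,z}"
  using two_set[OF wf1] by blast

lemma alive_cross:
  assumes x: "x \<in> V1 - Vf" and iso: "\<forall>e\<in>EH1 Vf Ef. x \<notin> e"
  and ni: "\<not> has_isolated_vertex (delete G (Vf,Ef))"
  shows "\<exists>v. v \<in> V2 - Vf \<and> {x,v} \<in> (M1 \<union> M2) - Ef"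
proof -
  have "x \<in> verts (delete G (Vf,Ef))" using x by simp
  then obtain e where e: "e \<in> edges (delete G (Vf,Ef))" "x \<in> e"
    using ni unfolding has_isolated_vertex_def by blast
  hence e1: "e \<in> E1 \<union> E2 \<union> M1 \<union> M2" "e \<notin> Ef" "e \<inter> Vf = {}" by auto
  have "e \<notin> E1" using iso e1 e(2) unfolding EH1_def by blast
  moreover have "e \<notin> E2" using E2sub e(2) x disj by blast
  ultimately have eM: "e \<in> M1 \<union> M2" using e1 by blast
  then obtain u v where uv: "u \<in> V1" "v \<in> V2" "e = {u,v}" using Medge by blast
  have "x = u" using uv e(2) x disj by auto
  thus ?thesis using uv e1 eM by auto
qed

lemma K2:
  assumes F: "Vf \<subseteq> V1 \<union> V2" "Ef \<subseteq> E1 \<union> E2 \<union> M1 \<union> M2"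
  and a1: "card (Vf \<inter> V1) + card (Ef \<inter> E1) = 2*n - 3"
  and a2: "card (Vf \<inter> V2) + card (Ef \<inter> E2) \<le> 2"
  and x: "x \<in> V1 - Vf" and iso: "\<forall>e\<in>EH1 Vf Ef. x \<notin> e"
  and ni: "\<not> has_isolated_vertex (delete G (Vf,Ef))"
  shows "\<exists>f. fractional_perfect_matching (delete G (Vf,Ef)) f"
proof -
  obtain v where v: "v \<in> V2 - Vf" "{x,v} \<in> (M1 \<union> M2) - Ef" using alive_cross[OF x iso ni] by blast
  have D: "{x} \<subseteq> V1 - Vf" "finite {x}" using x by auto
  have sz: "card (Vf \<inter> V2) + card (Ef \<inter> E2) + card {x} \<le> 2*n - 4" using a2 n5 by simp
  have sg: "\<forall>w\<in>{x}. (\<lambda>_. v) w \<in> V2 - Vf \<and> {w, (\<lambda>_. v) w} \<in> (M1 \<union> M2) - Ef" using v by simp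
  have inj: "inj_on (\<lambda>_. v) {x}" by simp
  show ?thesis
  proof (cases "\<exists>z. z \<in> Vf \<inter> V1 \<and> {x,z} \<in> E1 - Ef")
    case True
    then obtain z where z: "z \<in> Vf \<inter> V1" "{x,z} \<in> E1 - Ef" by blast
    have xz: "x \<noteq> z" using x z by auto
    let ?A = "Vf \<inter> V1 - {z}" and ?B = "Ef \<inter> E1"
    have cA: "card ?A = card (Vf \<inter> V1) - 1" using z finV1 by simp
    have "card (Vf \<inter> V1) \<ge> 1" using z finV1 by (metis One_nat_def Suc_leI card_gt_0_iff empty_iff)
    hence "card ?A + card ?B < 2*n - 3" using cA a1 n5 by linarith
    then obtain g where g: "fractional_perfect_matching (delete (V1,E1) (?A,?B)) g"
      using T1[of ?A ?B] by auto
    let ?EG = "edges (delete (V1,E1) (?A,?B))"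
    have EG: "?EG = {e \<in> E1 - ?B. e \<inter> ?A = {}}" by simp
    have finEG: "finite ?EG" using finE1 by simp
    have gb: "\<forall>e\<in>?EG. 0 \<le> g e \<and> g e \<le> 1" using g unfolding fractional_perfect_matching_def by blast
    have gsum: "\<And>w. w \<in> V1 - ?A \<Longrightarrow> (\<Sum>e\<in>{e\<in>?EG. w \<in> e}. g e) = 1"
      using g unfolding fractional_perfect_matching_def by simp
    have xzE: "{x,z} \<in> ?EG" using z x by auto
    have Sx: "{e\<in>?EG. x \<in> e} = {{x,z}}"
    proof
      show "{e\<in>?EG. x \<in> e} \<subseteq> {{x,z}}"
      proof
        fix e assume e: "e \<in> {e\<in>?EG. x \<in> e}"
        hence eE: "e \<in> E1" "e \<notin> Ef" "e \<inter> ?A = {}" "x \<in> e" by auto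
        show "e \<in> {{x,z}}"
        proof (rule ccontr)
          assume ne: "e \<notin> {{x,z}}"
          have "e \<notin> EH1 Vf Ef" using iso eE by blast
          hence "e \<inter> Vf \<noteq> {}" using eE unfolding EH1_def by blast
          then obtain y where y: "y \<in> e" "y \<in> Vf" by blast
          have "y \<in> V1" using E1sub eE y by blast
          have "y = z" using eE(3) y \<open>y \<in> V1\<close> by blast
          hence "e = {x,z}" using E1_2[OF eE(1) eE(4)] y xz by blast
          thus False using ne by simp
        qed
      qed
    qed (use xzE in blast)
    have gxz: "g {x,z} = 1" using gsum[of x] x Sx by simp
    have zsum: "(\<Sum>e\<in>{e\<in>?EG. z \<in> e}. g e) = 1" using gsum[of z] z by simp
    have g0: "g e = 0" if e: "e \<in> ?EG" "z \<in> e" "e \<noteq> {x,z}" for e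
    proof -
      let ?S = "{e\<in>?EG. z \<in> e}"
      have fS: "finite ?S" by (rule finite_subset[OF _ finEG]) blast
      have xzS: "{x,z} \<in> ?S" using xzE by blast
      have "(\<Sum>e\<in>?S. g e) = g {x,z} + (\<Sum>e\<in>?S - {{x,z}}. g e)"
        by (rule sum.remove[OF fS xzS])
      hence "(\<Sum>e\<in>?S - {{x,z}}. g e) = 0" using zsum gxz by simp
      moreover have "\<forall>e\<in>?S - {{x,z}}. 0 \<le> g e" using gb by blast
      ultimately have "\<forall>e\<in>?S - {{x,z}}. g e = 0" using sum_nonneg_eq_0_iff[of "?S - {{x,z}}" g] fS by blast
      thus ?thesis using e by blast
    qed
    have EH1sub: "EH1 Vf Ef \<subseteq> ?EG" unfolding EH1_def by auto
    have gb1: "\<forall>e\<in>EH1 Vf Ef. 0 \<le> g e \<and> g e \<le> 1" using gb EH1sub by blast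
    have gs1: "\<forall>w\<in>V1 - Vf. (\<Sum>e\<in>{e \<in> EH1 Vf Ef. w\<in>e}. g e) = 1 - (if w \<in> {x} then 1 else 0)"
    proof
      fix w assume w: "w \<in> V1 - Vf"
      show "(\<Sum>e\<in>{e \<in> EH1 Vf Ef. w\<in>e}. g e) = 1 - (if w \<in> {x} then 1 else 0)"
      proof (cases "w = x")
        case True
        have e0: "{e \<in> EH1 Vf Ef. w\<in>e} = {}" using iso True by blast
        show ?thesis unfolding e0 using True by simp
      next
        case False
        have wz: "w \<noteq> z" using w z by auto
        have spl: "{e\<in>?EG. w \<in> e} = {e \<in> EH1 Vf Ef. w\<in>e} \<union> {e\<in>?EG. w \<in> e \<and> z \<in> e}"
        proof
          show "{e\<in>?EG. w \<in> e} \<subseteq> {e \<in> EH1 Vf Ef. w\<in>e} \<union> {e\<in>?EG. w \<in> e \<and> z \<in> e}"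
          proof
            fix e assume e: "e \<in> {e\<in>?EG. w \<in> e}"
            show "e \<in> {e \<in> EH1 Vf Ef. w\<in>e} \<union> {e\<in>?EG. w \<in> e \<and> z \<in> e}"
            proof (cases "z \<in> e")
              case True thus ?thesis using e by blast
            next
              case False
              have "e \<subseteq> V1" using e E1sub by auto
              hence "e \<inter> Vf = {}" using e False by auto
              thus ?thesis using e unfolding EH1_def by auto
            qed
          qed
        qed (use EH1sub in auto)
        have dj: "{e \<in> EH1 Vf Ef. w\<in>e} \<inter> {e\<in>?EG. w \<in> e \<and> z \<in> e} = {}"
          using z unfolding EH1_def by auto
        have f1: "finite {e \<in> EH1 Vf Ef. w\<in>e}" using finE1 unfolding EH1_def by simp
        have f2: "finite {e\<in>?EG. w \<in> e \<and> z \<in> e}" by (rule finite_subset[OF _ finEG]) blast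
        have z0: "(\<Sum>e\<in>{e\<in>?EG. w \<in> e \<and> z \<in> e}. g e) = 0"
        proof (rule sum.neutral, rule ballI)
          fix e assume e: "e \<in> {e\<in>?EG. w \<in> e \<and> z \<in> e}"
          have "e \<noteq> {x,z}" using e False wz by auto
          thus "g e = 0" using g0 e by blast
        qed
        have "(\<Sum>e\<in>{e\<in>?EG. w \<in> e}. g e) = 1" using gsum[of w] w by simp
        hence "(\<Sum>e\<in>{e \<in> EH1 Vf Ef. w\<in>e}. g e) + 0 = 1"
          unfolding spl sum.union_disjoint[OF f1 f2 dj] z0 .
        thus ?thesis using False by simp
      qed
    qed
    show ?thesis by (rule export_single[OF D sz sg inj _ _ gb1 gs1]) simp_all
  next
    case False
    have star_sub: "{e \<in> E1. x \<in> e} \<subseteq> Ef \<inter> E1"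
    proof
      fix e assume e: "e \<in> {e \<in> E1. x \<in> e}"
      show "e \<in> Ef \<inter> E1"
      proof (rule ccontr)
        assume "e \<notin> Ef \<inter> E1"
        hence ne: "e \<notin> Ef" using e by blast
        have "e \<notin> EH1 Vf Ef" using iso e by blast
        then obtain y where y: "y \<in> e" "y \<in> Vf" using ne e unfolding EH1_def by blast
        have "y \<in> V1" using E1sub e y by blast
        have "y \<noteq> x" using x y by blast
        hence "e = {x,y}" using E1_2 e y by blast
        thus False using False y \<open>y \<in> V1\<close> e ne by blast
      qed
    qed
    let ?A = "insert x (Vf \<inter> V1)" and ?B = "Ef \<inter> E1 - {e \<in> E1. x \<in> e}"
    have cA: "card ?A = card (Vf \<inter> V1) + 1" using x finV1 by simp
    have cB: "card ?B = card (Ef \<inter> E1) - (2*n - 3)"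
      using card_Diff_subset[OF finite_subset[OF star_sub finEf1] star_sub] star1_card x by simp
    have "card (Ef \<inter> E1) \<ge> 2*n - 3" using card_mono[OF finEf1 star_sub] star1_card x by simp
    hence "card ?A + card ?B < 2*n - 3" using cA cB a1 n5 by linarith
    moreover have "?A \<subseteq> V1" "?B \<subseteq> E1" using x by auto
    ultimately obtain g where g: "fractional_perfect_matching (delete (V1,E1) (?A,?B)) g"
      using T1[of ?A ?B] by blast
    have EG: "edges (delete (V1,E1) (?A,?B)) = EH1 Vf Ef"
    proof -
      have "edges (delete (V1,E1) (?A,?B)) = {e \<in> E1 - ?B. e \<inter> ?A = {}}" by simp
      also have "\<dots> = EH1 Vf Ef"
      proof
        show "{e \<in> E1 - ?B. e \<inter> ?A = {}} \<subseteq> EH1 Vf Ef" unfolding EH1_def using E1sub by blast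
        show "EH1 Vf Ef \<subseteq> {e \<in> E1 - ?B. e \<inter> ?A = {}}"
          using iso E1sub unfolding EH1_def by blast
      qed
      finally show ?thesis .
    qed
    have gb1: "\<forall>e\<in>EH1 Vf Ef. 0 \<le> g e \<and> g e \<le> 1"
      using g EG unfolding fractional_perfect_matching_def by blast
    have gs1: "\<forall>w\<in>V1 - Vf. (\<Sum>e\<in>{e \<in> EH1 Vf Ef. w\<in>e}. g e) = 1 - (if w \<in> {x} then 1 else 0)"
    proof
      fix w assume w: "w \<in> V1 - Vf"
      show "(\<Sum>e\<in>{e \<in> EH1 Vf Ef. w\<in>e}. g e) = 1 - (if w \<in> {x} then 1 else 0)"
      proof (cases "w = x")
        case True
        have e0: "{e \<in> EH1 Vf Ef. w\<in>e} = {}" using iso True by blast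
        show ?thesis unfolding e0 using True by simp
      next
        case False
        hence "w \<in> verts (delete (V1,E1) (?A,?B))" using w by simp
        hence "(\<Sum>e\<in>{e \<in> edges (delete (V1,E1) (?A,?B)). w\<in>e}. g e) = 1"
          using g unfolding fractional_perfect_matching_def by blast
        hence "(\<Sum>e\<in>{e \<in> EH1 Vf Ef. w\<in>e}. g e) = 1" unfolding EG .
        thus ?thesis using False by simp
      qed
    qed
    show ?thesis by (rule export_single[OF D sz sg inj _ _ gb1 gs1]) simp_all
  qed
qed

end

context mainc begin

definition dopt :: "'a set \<Rightarrow> 'a set set \<Rightarrow> 'a \<Rightarrow> bool" where
  "dopt Vf Ef w \<longleftrightarrow> (\<exists>v. {w,v} \<in> M1 \<union> M2 \<and> ({w,v} \<in> Ef \<or> v \<in> Vf))"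

lemma partners: assumes "w \<in> V1"
  obtains v1 v2 where "v1 \<in> V2" "v2 \<in> V2" "v1 \<noteq> v2" "{w,v1} \<in> M1" "{w,v2} \<in> M2"
    "\<And>v. {w,v} \<in> M1 \<union> M2 \<Longrightarrow> v = v1 \<or> v = v2"
proof -
  obtain v1 where v1: "v1 \<in> V2" "{v. {w,v} \<in> M1} = {v1}" using part1 assms by blast
  obtain v2 where v2: "v2 \<in> V2" "{v. {w,v} \<in> M2} = {v2}" using part2 assms by blast
  have "v1 \<noteq> v2" using v1 v2 dM by auto
  moreover have "{w,v1} \<in> M1" "{w,v2} \<in> M2" using v1 v2 by auto
  moreover have "\<And>v. {w,v} \<in> M1 \<union> M2 \<Longrightarrow> v = v1 \<or> v = v2" using v1 v2 by auto
  ultimately show ?thesis by (intro that[of v1 v2]) (use v1 v2 in simp_all)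
qed

lemma card2I: assumes "finite S" "a \<in> S" "b \<in> S" "a \<noteq> b" shows "card S \<ge> 2"
proof -
  have "card {a,b} \<le> card S" using assms by (intro card_mono) auto
  thus ?thesis using assms by simp
qed

lemma card1I: assumes "finite S" "a \<in> S" shows "card S \<ge> 1"
proof -
  have "card S > 0" using assms card_gt_0_iff by blast
  thus ?thesis by simp
qed

lemma opt1:
  assumes t: "card (Vf \<inter> V2) + card (Ef \<inter> (M1 \<union> M2)) \<le> 1" and w: "w \<in> V1"
  shows "\<exists>s. s \<in> V2 - Vf \<and> {w,s} \<in> (M1 \<union> M2) - Ef"
proof (rule ccontr)
  assume na: "\<not> ?thesis"
  obtain v1 v2 where p: "v1 \<in> V2" "v2 \<in> V2" "v1 \<noteq> v2" "{w,v1} \<in> M1" "{w,v2} \<in> M2"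
    using partners[OF w] by metis
  have d1: "{w,v1} \<in> Ef \<or> v1 \<in> Vf" using na p by blast
  have d2: "{w,v2} \<in> Ef \<or> v2 \<in> Vf" using na p by blast
  have fA: "finite (Vf \<inter> V2)" using fin2 by simp
  have fB: "finite (Ef \<inter> (M1 \<union> M2))" using finM by simp
  have ne: "{w,v1} \<noteq> {w,v2}" using p by (auto simp: doubleton_eq_iff)
  from d1 d2 show False
  proof (elim disjE)
    assume "{w,v1} \<in> Ef" "{w,v2} \<in> Ef"
    hence "card (Ef \<inter> (M1 \<union> M2)) \<ge> 2" using card2I[OF fB, of "{w,v1}" "{w,v2}"] p ne by blast
    thus False using t by simp
  next
    assume "{w,v1} \<in> Ef" "v2 \<in> Vf"
    hence "card (Ef \<inter> (M1 \<union> M2)) \<ge> 1" "card (Vf \<inter> V2) \<ge> 1"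
      using card1I[OF fB, of "{w,v1}"] card1I[OF fA, of v2] p by blast+
    thus False using t by simp
  next
    assume "v1 \<in> Vf" "{w,v2} \<in> Ef"
    hence "card (Ef \<inter> (M1 \<union> M2)) \<ge> 1" "card (Vf \<inter> V2) \<ge> 1"
      using card1I[OF fB, of "{w,v2}"] card1I[OF fA, of v1] p by blast+
    thus False using t by simp
  next
    assume "v1 \<in> Vf" "v2 \<in> Vf"
    hence "card (Vf \<inter> V2) \<ge> 2" using card2I[OF fA, of v1 v2] p by blast
    thus False using t by simp
  qed
qed

lemma opt2:
  assumes t: "card (Vf \<inter> V2) + card (Ef \<inter> (M1 \<union> M2)) \<le> 1" and w: "w \<in> V1" "w' \<in> V1"
  and nd: "\<not> dopt Vf Ef w"
  shows "\<exists>s s'. s \<noteq> s' \<and> s \<in> V2 - Vf \<and> {w,s} \<in> (M1 \<union> M2) - Ef \<and> s' \<in> V2 - Vf \<and> {w',s'} \<in> (M1 \<union> M2) - Ef"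
proof -
  obtain s' where s': "s' \<in> V2 - Vf" "{w',s'} \<in> (M1 \<union> M2) - Ef" using opt1[OF t w(2)] by blast
  obtain v1 v2 where p: "v1 \<in> V2" "v2 \<in> V2" "v1 \<noteq> v2" "{w,v1} \<in> M1" "{w,v2} \<in> M2"
    using partners[OF w(1)] by metis
  have a1: "v1 \<in> V2 - Vf" "{w,v1} \<in> (M1 \<union> M2) - Ef" using nd p unfolding dopt_def by blast+
  have a2: "v2 \<in> V2 - Vf" "{w,v2} \<in> (M1 \<union> M2) - Ef" using nd p unfolding dopt_def by blast+
  show ?thesis
  proof (cases "v1 = s'")
    case True thus ?thesis using a2 s' p by metis
  next
    case False thus ?thesis using a1 s' by metis
  qed
qed

lemma cross_other: assumes "w \<in> V1" "{w,v} \<in> M1 \<union> M2" shows "v \<in> V2"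
proof -
  obtain a b where ab: "a \<in> V1" "b \<in> V2" "{w,v} = {a,b}" using Medge[OF assms(2)] by blast
  thus ?thesis using assms(1) disj by (auto simp: doubleton_eq_iff)
qed

lemma dopt_card:
  assumes t: "card (Vf \<inter> V2) + card (Ef \<inter> (M1 \<union> M2)) \<le> 1"
  shows "card {w \<in> V1. dopt Vf Ef w} \<le> 2"
proof -
  have fA: "finite (Vf \<inter> V2)" using fin2 by simp
  have fB: "finite (Ef \<inter> (M1 \<union> M2))" using finM by simp
  let ?D = "{w \<in> V1. dopt Vf Ef w}"
  have fD: "finite ?D" using fin1 by simp
  show ?thesis
  proof (cases "Vf \<inter> V2 = {}")
    case True
    show ?thesis
    proof (cases "Ef \<inter> (M1 \<union> M2) = {}")
      case True2: True
      have e0: "?D = {}"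
      proof (rule ccontr)
        assume "?D \<noteq> {}"
        then obtain w v where "w \<in> V1" "{w,v} \<in> M1 \<union> M2" "{w,v} \<in> Ef \<or> v \<in> Vf" unfolding dopt_def by blast
        moreover have "v \<in> V2" using calculation cross_other by blast
        ultimately show False using True True2 by blast
      qed
      show ?thesis unfolding e0 by simp
    next
      case False
      then obtain phi where phi: "phi \<in> Ef \<inter> (M1 \<union> M2)" by blast
      have "card (Ef \<inter> (M1 \<union> M2)) \<ge> 1" using card1I[OF fB phi] .
      hence c0: "card (Ef \<inter> (M1 \<union> M2)) = 1" using t by simp
      from c0 obtain phi' where "Ef \<inter> (M1 \<union> M2) = {phi'}" by (rule card_1_singletonE)
      obtain a b where ab: "a \<in> V1" "b \<in> V2" "phi' = {a,b}" using Medge \<open>Ef \<inter> (M1 \<union> M2) = {phi'}\<close> by blast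
      have "?D \<subseteq> {a}"
      proof
        fix w assume "w \<in> ?D"
        then obtain v where v: "w \<in> V1" "{w,v} \<in> M1 \<union> M2" "{w,v} \<in> Ef \<or> v \<in> Vf" unfolding dopt_def by blast
        have "v \<in> V2" using v cross_other by blast
        hence "{w,v} \<in> Ef" using v True by blast
        hence "{w,v} \<in> Ef \<inter> (M1 \<union> M2)" using v by blast
        hence "{w,v} = {a,b}" using \<open>Ef \<inter> (M1 \<union> M2) = {phi'}\<close> ab by simp
        hence "w = a \<or> w = b" by (simp add: doubleton_eq_iff) blast
        thus "w \<in> {a}" using v(1) ab(2) disj by blast
      qed
      thus ?thesis using card_mono[of "{a}" ?D] by simp
    qed
  next
    case False
    then obtain y where y: "y \<in> Vf \<inter> V2" by blast
    have "card (Vf \<inter> V2) \<ge> 1" using card1I[OF fA y] .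
    hence "card (Vf \<inter> V2) = 1" "card (Ef \<inter> (M1 \<union> M2)) = 0" using t by simp_all
    hence c1: "card (Vf \<inter> V2) = 1" and c2: "card (Ef \<inter> (M1 \<union> M2)) = 0" by simp_all
    from c1 obtain y' where y': "Vf \<inter> V2 = {y'}" by (rule card_1_singletonE)
    have "y = y'" using y' y by blast
    hence V2y: "Vf \<inter> V2 = {y}" using y' by simp
    have noE: "Ef \<inter> (M1 \<union> M2) = {}" using c2 fB by simp
    interpret S: twoh V2 E2 V1 E1 M1 M2 by (rule sym)
    obtain a where a: "a \<in> V1" "{u. {y,u} \<in> M1} = {a}" using S.part1 y by blast
    obtain b where b: "b \<in> V1" "{u. {y,u} \<in> M2} = {b}" using S.part2 y by blast
    have "?D \<subseteq> {a,b}"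
    proof
      fix w assume "w \<in> ?D"
      then obtain v where v: "w \<in> V1" "{w,v} \<in> M1 \<union> M2" "{w,v} \<in> Ef \<or> v \<in> Vf" unfolding dopt_def by blast
      have "v \<in> V2" using v cross_other by blast
      hence "v = y" using v noE V2y by blast
      hence "{y,w} \<in> M1 \<union> M2" using v by (simp add: insert_commute)
      thus "w \<in> {a,b}" using a b by blast
    qed
    hence "card ?D \<le> card {a,b}" by (rule card_mono[rotated]) simp
    also have "\<dots> \<le> 2" by (simp add: card_insert_le_m1)
    finally show ?thesis .
  qed
qed

lemma good_edge:
  assumes t: "card (Vf \<inter> V2) + card (Ef \<inter> (M1 \<union> M2)) \<le> 1"
  and r: "r1 \<in> E1" "r2 \<in> E1" "r1 \<noteq> r2"
  shows "\<exists>r\<in>{r1,r2}. \<exists>u\<in>r. \<not> dopt Vf Ef u"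
proof (rule ccontr)
  assume "\<not> ?thesis"
  hence sub: "r1 \<union> r2 \<subseteq> {w \<in> V1. dopt Vf Ef w}" using E1sub r by blast
  obtain a b where ab: "a \<noteq> b" "r1 = {a,b}" using wfeE[OF wf1 r(1)] by metis
  obtain c d where cd: "c \<noteq> d" "r2 = {c,d}" using wfeE[OF wf1 r(2)] by metis
  have "card (r1 \<union> r2) \<ge> 3"
  proof -
    have "\<exists>y\<in>r2. y \<notin> r1" using ab cd r(3) by auto
    then obtain y where y: "y \<in> r2" "y \<notin> r1" by blast
    have "insert y r1 \<subseteq> r1 \<union> r2" using y by blast
    moreover have "card (insert y r1) = 3" using y ab by simp
    ultimately show ?thesis using card_mono[of "r1 \<union> r2" "insert y r1"] ab cd by simp
  qed
  moreover have "card (r1 \<union> r2) \<le> card {w \<in> V1. dopt Vf Ef w}"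
    using card_mono[OF _ sub] fin1 by simp
  ultimately show False using dopt_card[OF t] by simp
qed

end

context mainc begin

lemma EH1_sub_EG: "EH1 Vf Ef \<subseteq> {e \<in> E1 - Ef \<inter> E1. e \<inter> A = {}}" if "A \<subseteq> Vf" for A
  using that unfolding EH1_def by blast

lemma ER:
  assumes F: "Vf \<subseteq> V1 \<union> V2" "Ef \<subseteq> E1 \<union> E2 \<union> M1 \<union> M2"
  and a1: "card (Vf \<inter> V1) + card (Ef \<inter> E1) = 2*n - 2"
  and t: "card (Vf \<inter> V2) + card (Ef \<inter> (M1 \<union> M2)) \<le> 1" and t2: "card (Vf \<inter> V2) + card (Ef \<inter> E2) \<le> 1"
  and r: "r \<in> Ef \<inter> E1" "r \<inter> Vf = {}" and u: "u \<in> r" "\<not> dopt Vf Ef u"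
  and ni: "\<not> has_isolated_vertex (delete (V1,E1) (Vf \<inter> V1, Ef \<inter> E1 - {r}))"
  shows "\<exists>f. fractional_perfect_matching (delete G (Vf,Ef)) f"
proof -
  have rE: "r \<in> E1" using r by blast
  obtain a b where ab: "a \<noteq> b" "r = {a,b}" using wfeE[OF wf1 rE] by metis
  define u' where "u' = (if u = a then b else a)"
  have u': "u' \<noteq> u" "r = {u,u'}" using ab u(1) unfolding u'_def by (auto simp: insert_commute)
  have rV1: "r \<subseteq> V1" using E1sub r by blast
  have uV: "u \<in> V1 - Vf" "u' \<in> V1 - Vf" using rV1 r u' by auto
  let ?A = "Vf \<inter> V1" and ?B = "Ef \<inter> E1 - {r}"
  have cB: "card ?B = card (Ef \<inter> E1) - 1" using r finEf1 by simp
  have "card (Ef \<inter> E1) \<ge> 1" using card1I[OF finEf1] r(1) .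
  hence "card ?A + card ?B \<le> 2*n - 3" using cB a1 by linarith
  then obtain g where g: "fractional_perfect_matching (delete (V1,E1) (?A,?B)) g"
    using T2[of ?A ?B] ni by blast
  let ?EG = "edges (delete (V1,E1) (?A,?B))"
  have rEG: "r \<in> ?EG" using r by auto
  have EG: "?EG = EH1 Vf Ef \<union> {r}"
  proof
    show "?EG \<subseteq> EH1 Vf Ef \<union> {r}"
    proof
      fix e assume e: "e \<in> ?EG"
      have "e \<inter> Vf = {}" using e E1sub by auto
      thus "e \<in> EH1 Vf Ef \<union> {r}" using e unfolding EH1_def by auto
    qed
    show "EH1 Vf Ef \<union> {r} \<subseteq> ?EG" using rEG unfolding EH1_def by auto
  qed
  have rnot: "r \<notin> EH1 Vf Ef" using r unfolding EH1_def by blast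
  have gb: "\<forall>e\<in>?EG. 0 \<le> g e \<and> g e \<le> 1" using g unfolding fractional_perfect_matching_def by blast
  have gb1: "\<forall>e\<in>EH1 Vf Ef. 0 \<le> g e \<and> g e \<le> 1" using gb EG by blast
  have gr: "0 \<le> g r" "g r \<le> 1" using gb rEG by auto
  have gs1: "\<forall>w\<in>V1 - Vf. (\<Sum>e\<in>{e \<in> EH1 Vf Ef. w\<in>e}. g e) = 1 - (if w \<in> {u,u'} then g r else 0)"
  proof
    fix w assume w: "w \<in> V1 - Vf"
    hence "w \<in> verts (delete (V1,E1) (?A,?B))" by simp
    hence s1: "(\<Sum>e\<in>{e \<in> ?EG. w\<in>e}. g e) = 1" using g unfolding fractional_perfect_matching_def by blast
    have fin: "finite {e \<in> EH1 Vf Ef. w\<in>e}" using finE1 unfolding EH1_def by simp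
    show "(\<Sum>e\<in>{e \<in> EH1 Vf Ef. w\<in>e}. g e) = 1 - (if w \<in> {u,u'} then g r else 0)"
    proof (cases "w \<in> r")
      case True
      have "{e \<in> ?EG. w\<in>e} = insert r {e \<in> EH1 Vf Ef. w\<in>e}" using EG True by blast
      hence "g r + (\<Sum>e\<in>{e \<in> EH1 Vf Ef. w\<in>e}. g e) = 1" using s1 fin rnot by simp
      thus ?thesis using True u' by simp
    next
      case False
      have "{e \<in> ?EG. w\<in>e} = {e \<in> EH1 Vf Ef. w\<in>e}" using EG False by blast
      thus ?thesis using s1 False u' by simp
    qed
  qed
  obtain s s' where ss: "s \<noteq> s'" "s \<in> V2 - Vf" "{u,s} \<in> (M1 \<union> M2) - Ef" "s' \<in> V2 - Vf" "{u',s'} \<in> (M1 \<union> M2) - Ef"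
    using opt2[OF t _ _ u(2), of u'] uV by blast
  define sg where "sg y = (if y = u then s else s')" for y
  have D: "{u,u'} \<subseteq> V1 - Vf" "finite {u,u'}" using uV by auto
  have sz: "card (Vf \<inter> V2) + card (Ef \<inter> E2) + card {u,u'} \<le> 2*n - 4" using t2 n5 u' by simp
  have sgo: "\<forall>w\<in>{u,u'}. sg w \<in> V2 - Vf \<and> {w, sg w} \<in> (M1 \<union> M2) - Ef" using ss u' unfolding sg_def by auto
  have inj: "inj_on sg {u,u'}" using ss u' unfolding sg_def inj_on_def by auto
  show ?thesis by (rule export_single[OF D sz sgo inj gr gb1 gs1])
qed

lemma VR:
  assumes F: "Vf \<subseteq> V1 \<union> V2" "Ef \<subseteq> E1 \<union> E2 \<union> M1 \<union> M2"
  and a1: "card (Vf \<inter> V1) + card (Ef \<inter> E1) = 2*n - 2"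
  and t: "card (Vf \<inter> V2) + card (Ef \<inter> (M1 \<union> M2)) \<le> 1" and t2: "card (Vf \<inter> V2) + card (Ef \<inter> E2) \<le> 1"
  and z: "z \<in> Vf \<inter> V1"
  and ni: "\<not> has_isolated_vertex (delete (V1,E1) (Vf \<inter> V1 - {z}, Ef \<inter> E1))"
  shows "\<exists>f. fractional_perfect_matching (delete G (Vf,Ef)) f"
proof -
  let ?A = "Vf \<inter> V1 - {z}" and ?B = "Ef \<inter> E1"
  have cA: "card ?A = card (Vf \<inter> V1) - 1" using z finV1 by simp
  have "card (Vf \<inter> V1) \<ge> 1" using card1I[OF finV1] z .
  hence "card ?A + card ?B \<le> 2*n - 3" using cA a1 by linarith
  then obtain g where g: "fractional_perfect_matching (delete (V1,E1) (?A,?B)) g"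
    using T2[of ?A ?B] ni by blast
  let ?EG = "edges (delete (V1,E1) (?A,?B))"
  have finEG: "finite ?EG" using finE1 by simp
  have gb: "\<forall>e\<in>?EG. 0 \<le> g e \<and> g e \<le> 1" using g unfolding fractional_perfect_matching_def by blast
  have EH1sub: "EH1 Vf Ef \<subseteq> ?EG" unfolding EH1_def by auto
  have gb1: "\<forall>e\<in>EH1 Vf Ef. 0 \<le> g e \<and> g e \<le> 1" using gb EH1sub by blast
  define D where "D = {w \<in> V1 - Vf. {z,w} \<in> ?EG}"
  have finD: "finite D" unfolding D_def using fin1 by simp
  have DV: "D \<subseteq> V1 - Vf" unfolding D_def by blast
  have zeq: "{e \<in> ?EG. z \<in> e} = (\<lambda>w. {z,w}) ` D"
  proof
    show "{e \<in> ?EG. z \<in> e} \<subseteq> (\<lambda>w. {z,w}) ` D"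
    proof
      fix e assume e: "e \<in> {e \<in> ?EG. z \<in> e}"
      hence eE: "e \<in> E1" "e \<inter> ?A = {}" "z \<in> e" by auto
      obtain a b where ab: "a \<noteq> b" "a \<in> V1" "b \<in> V1" "e = {a,b}" using wfeE[OF wf1 eE(1)] by metis
      define w where "w = (if a = z then b else a)"
      have w: "e = {z,w}" "w \<noteq> z" "w \<in> V1" using ab eE(3) unfolding w_def by (auto simp: insert_commute)
      have "w \<notin> Vf" using eE(2) w by blast
      hence "w \<in> D" unfolding D_def using w e by auto
      thus "e \<in> (\<lambda>w. {z,w}) ` D" using w by blast
    qed
    show "(\<lambda>w. {z,w}) ` D \<subseteq> {e \<in> ?EG. z \<in> e}" unfolding D_def by blast
  qed
  have injz: "inj_on (\<lambda>w. {z,w}) D" unfolding inj_on_def by (simp add: doubleton_eq_iff)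
  have "z \<in> verts (delete (V1,E1) (?A,?B))" using z by simp
  hence "(\<Sum>e\<in>{e \<in> ?EG. z\<in>e}. g e) = 1" using g unfolding fractional_perfect_matching_def by blast
  hence dsum: "(\<Sum>w\<in>D. g {z,w}) = 1" unfolding zeq sum.reindex[OF injz] by (simp add: comp_def)
  have db: "\<forall>w\<in>D. 0 \<le> g {z,w} \<and> g {z,w} \<le> 1" using gb unfolding D_def by blast
  have gs1: "\<forall>w\<in>V1 - Vf. (\<Sum>e\<in>{e \<in> EH1 Vf Ef. w\<in>e}. g e) = 1 - (if w \<in> D then g {z,w} else 0)"
  proof
    fix w assume w: "w \<in> V1 - Vf"
    hence "w \<in> verts (delete (V1,E1) (?A,?B))" by simp
    hence s1: "(\<Sum>e\<in>{e \<in> ?EG. w\<in>e}. g e) = 1" using g unfolding fractional_perfect_matching_def by blast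
    have wz: "w \<noteq> z" using w z by blast
    have fin: "finite {e \<in> EH1 Vf Ef. w\<in>e}" using finE1 unfolding EH1_def by simp
    have spl: "{e \<in> ?EG. w\<in>e} = {e \<in> EH1 Vf Ef. w\<in>e} \<union> {e \<in> ?EG. w \<in> e \<and> z \<in> e}"
    proof
      show "{e \<in> ?EG. w\<in>e} \<subseteq> {e \<in> EH1 Vf Ef. w\<in>e} \<union> {e \<in> ?EG. w \<in> e \<and> z \<in> e}"
      proof
        fix e assume e: "e \<in> {e \<in> ?EG. w\<in>e}"
        show "e \<in> {e \<in> EH1 Vf Ef. w\<in>e} \<union> {e \<in> ?EG. w \<in> e \<and> z \<in> e}"
        proof (cases "z \<in> e")
          case True thus ?thesis using e by blast
        next
          case False
          have "e \<subseteq> V1" using e E1sub by auto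
          hence "e \<inter> Vf = {}" using e False by auto
          thus ?thesis using e unfolding EH1_def by auto
        qed
      qed
    qed (use EH1sub in auto)
    have dj: "{e \<in> EH1 Vf Ef. w\<in>e} \<inter> {e \<in> ?EG. w \<in> e \<and> z \<in> e} = {}"
      using z unfolding EH1_def by auto
    have zw: "{e \<in> ?EG. w \<in> e \<and> z \<in> e} = (if w \<in> D then {{z,w}} else {})"
    proof (cases "w \<in> D")
      case True
      have "{e \<in> ?EG. w \<in> e \<and> z \<in> e} = {{z,w}}"
      proof
        show "{e \<in> ?EG. w \<in> e \<and> z \<in> e} \<subseteq> {{z,w}}"
        proof
          fix e assume e: "e \<in> {e \<in> ?EG. w \<in> e \<and> z \<in> e}"
          hence "e = {z,w}" using E1_2[of e z w] wz by auto
          thus "e \<in> {{z,w}}" by simp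
        qed
        show "{{z,w}} \<subseteq> {e \<in> ?EG. w \<in> e \<and> z \<in> e}" using True unfolding D_def by blast
      qed
      thus ?thesis using True by simp
    next
      case False
      have "{e \<in> ?EG. w \<in> e \<and> z \<in> e} = {}"
      proof (rule ccontr)
        assume "{e \<in> ?EG. w \<in> e \<and> z \<in> e} \<noteq> {}"
        then obtain e where e: "e \<in> ?EG" "w \<in> e" "z \<in> e" by blast
        hence "e = {z,w}" using E1_2[of e z w] wz by auto
        thus False using False e w unfolding D_def by blast
      qed
      thus ?thesis using False by simp
    qed
    have f2: "finite {e \<in> ?EG. w \<in> e \<and> z \<in> e}" by (rule finite_subset[OF _ finEG]) blast
    have "(\<Sum>e\<in>{e \<in> EH1 Vf Ef. w\<in>e}. g e) + (\<Sum>e\<in>{e \<in> ?EG. w \<in> e \<and> z \<in> e}. g e) = 1"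
      using s1 unfolding spl sum.union_disjoint[OF fin f2 dj] .
    thus "(\<Sum>e\<in>{e \<in> EH1 Vf Ef. w\<in>e}. g e) = 1 - (if w \<in> D then g {z,w} else 0)"
      unfolding zw by (cases "w \<in> D") simp_all
  qed
  define sg where "sg w = (SOME s. s \<in> V2 - Vf \<and> {w,s} \<in> (M1 \<union> M2) - Ef)" for w
  have sgo: "\<forall>w\<in>D. sg w \<in> V2 - Vf \<and> {w, sg w} \<in> (M1 \<union> M2) - Ef"
  proof
    fix w assume "w \<in> D"
    hence "w \<in> V1" using DV by blast
    hence ex: "\<exists>s. s \<in> V2 - Vf \<and> {w,s} \<in> (M1 \<union> M2) - Ef" using opt1[OF t] by blast
    show "sg w \<in> V2 - Vf \<and> {w, sg w} \<in> (M1 \<union> M2) - Ef"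
      unfolding sg_def by (rule someI_ex[OF ex])
  qed
  have sz: "card (Vf \<inter> V2) + card (Ef \<inter> E2) + 1 \<le> 2*n - 4" using t2 n5 by simp
  show ?thesis
    by (rule export_family[OF sz DV finD sgo, of "\<lambda>w. g {z,w}"]) (use db dsum gb1 gs1 in auto)
qed

end

context mainc begin

lemma nb_kill:
  assumes x: "x \<in> V1 - Vf" and iso: "\<forall>e\<in>EH1 Vf Ef. x \<notin> e"
  shows "card (nb (V1,E1) x) \<le> card (nb (V1,E1) x \<inter> Vf) + card {e \<in> Ef \<inter> E1. x \<in> e}"
proof -
  let ?P = "nb (V1,E1) x \<inter> Vf" and ?Q = "{w. {x,w} \<in> Ef \<inter> E1}"
  have sub: "nb (V1,E1) x \<subseteq> ?P \<union> ?Q"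
  proof
    fix w assume w: "w \<in> nb (V1,E1) x"
    hence e: "{x,w} \<in> E1" unfolding nb_def by simp
    show "w \<in> ?P \<union> ?Q"
    proof (cases "{x,w} \<in> Ef")
      case True thus ?thesis using e by blast
    next
      case False
      have "{x,w} \<notin> EH1 Vf Ef" using iso by blast
      hence "{x,w} \<inter> Vf \<noteq> {}" using e False unfolding EH1_def by blast
      hence "w \<in> Vf" using x by blast
      thus ?thesis using w by blast
    qed
  qed
  have fP: "finite ?P" using nb1_fin by simp
  have fS: "finite {e \<in> Ef \<inter> E1. x \<in> e}" by (rule finite_subset[OF _ finE1]) blast
  have inj: "inj_on (\<lambda>w. {x,w}) ?Q" unfolding inj_on_def by (simp add: doubleton_eq_iff)
  have im: "(\<lambda>w. {x,w}) ` ?Q \<subseteq> {e \<in> Ef \<inter> E1. x \<in> e}" by auto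
  have "card ?Q \<le> card {e \<in> Ef \<inter> E1. x \<in> e}" by (rule card_inj_on_le[OF inj im fS])
  moreover have "finite ?Q" by (rule finite_subset[OF _ nb1_fin[of x]]) (auto simp: nb_def)
  ultimately have "card (?P \<union> ?Q) \<le> card ?P + card {e \<in> Ef \<inter> E1. x \<in> e}"
    using card_Un_le[of ?P ?Q] by linarith
  moreover have "card (nb (V1,E1) x) \<le> card (?P \<union> ?Q)"
    using card_mono[OF _ sub] fP \<open>finite ?Q\<close> by blast
  ultimately show ?thesis by linarith
qed

lemma uniq_iso:
  assumes a1: "card (Vf \<inter> V1) + card (Ef \<inter> E1) \<le> 2*n - 2"
  and x: "x \<in> V1 - Vf" "\<forall>e\<in>EH1 Vf Ef. x \<notin> e"
  and y: "y \<in> V1 - Vf" "\<forall>e\<in>EH1 Vf Ef. y \<notin> e"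
  and xy: "x \<noteq> y"
  shows False
proof -
  let ?Px = "nb (V1,E1) x \<inter> Vf" and ?Py = "nb (V1,E1) y \<inter> Vf"
  let ?Sx = "{e \<in> Ef \<inter> E1. x \<in> e}" and ?Sy = "{e \<in> Ef \<inter> E1. y \<in> e}"
  have kx: "2*n - 3 \<le> card ?Px + card ?Sx" using nb_kill[OF x] nb1_card x by simp
  have ky: "2*n - 3 \<le> card ?Py + card ?Sy" using nb_kill[OF y] nb1_card y by simp
  have fPx: "finite ?Px" "finite ?Py" using nb1_fin by simp_all
  have fSx: "finite ?Sx" "finite ?Sy" by (rule finite_subset[OF _ finE1], blast)+
  have PU: "card (?Px \<union> ?Py) \<le> card (Vf \<inter> V1)"
    by (rule card_mono[OF finV1]) (use nb1_sub in blast)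
  have SU: "card (?Sx \<union> ?Sy) \<le> card (Ef \<inter> E1)" by (rule card_mono[OF finEf1]) blast
  have PI: "card (?Px \<inter> ?Py) \<le> 2*n - 6"
  proof -
    have "card (?Px \<inter> ?Py) \<le> card (nb (V1,E1) x \<inter> nb (V1,E1) y)"
      by (rule card_mono) (use nb1_fin in auto)
    thus ?thesis using nb1_common[of x y] x y xy by simp
  qed
  have SI: "card (?Sx \<inter> ?Sy) \<le> 1"
  proof -
    have "?Sx \<inter> ?Sy \<subseteq> {{x,y}}" using E1_2 xy by blast
    thus ?thesis using card_mono[of "{{x,y}}" "?Sx \<inter> ?Sy"] by simp
  qed
  have "card ?Px + card ?Py = card (?Px \<union> ?Py) + card (?Px \<inter> ?Py)" by (rule card_Un_Int[OF fPx])
  moreover have "card ?Sx + card ?Sy = card (?Sx \<union> ?Sy) + card (?Sx \<inter> ?Sy)" by (rule card_Un_Int[OF fSx])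
  ultimately show False using kx ky PU SU PI SI a1 n5 by linarith
qed

lemma two_elems: assumes "finite S" "card S \<ge> 2" obtains a b where "a \<in> S" "b \<in> S" "a \<noteq> b"
proof -
  obtain T where T: "T \<subseteq> S" "card T = 2" using obtain_subset_with_card_n[OF assms(2)] by metis
  then obtain a b where "T = {a,b}" "a \<noteq> b" by (auto simp: card_2_iff)
  thus ?thesis using that T by blast
qed

end

lemma noiso_intro: "(\<And>v. v \<in> verts H \<Longrightarrow> \<exists>e\<in>edges H. v \<in> e) \<Longrightarrow> \<not> has_isolated_vertex H"
  unfolding has_isolated_vertex_def by blast

context mainc begin

lemma nb_kill2:
  assumes z: "z \<in> V1" and h: "\<forall>e\<in>E1 - Ef. z \<in> e \<longrightarrow> e \<inter> (Vf \<inter> V1 - {z}) \<noteq> {}"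
  shows "card (nb (V1,E1) z) \<le> card (nb (V1,E1) z \<inter> (Vf \<inter> V1)) + card (Ef \<inter> E1)"
proof -
  let ?P = "nb (V1,E1) z \<inter> (Vf \<inter> V1)" and ?Q = "{w. {z,w} \<in> Ef \<inter> E1}"
  have sub: "nb (V1,E1) z \<subseteq> ?P \<union> ?Q"
  proof
    fix w assume w: "w \<in> nb (V1,E1) z"
    hence e: "{z,w} \<in> E1" unfolding nb_def by simp
    have wz: "w \<noteq> z" using e wfe_card2[OF wf1 e] by auto
    show "w \<in> ?P \<union> ?Q"
    proof (cases "{z,w} \<in> Ef")
      case True thus ?thesis using e by blast
    next
      case False
      hence "{z,w} \<inter> (Vf \<inter> V1 - {z}) \<noteq> {}" using h e by blast
      hence "w \<in> Vf \<inter> V1" using wz by blast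
      thus ?thesis using w by blast
    qed
  qed
  have fP: "finite ?P" using nb1_fin by simp
  have fQ: "finite ?Q" by (rule finite_subset[OF _ nb1_fin[of z]]) (auto simp: nb_def)
  have inj: "inj_on (\<lambda>w. {z,w}) ?Q" unfolding inj_on_def by (simp add: doubleton_eq_iff)
  have im: "(\<lambda>w. {z,w}) ` ?Q \<subseteq> Ef \<inter> E1" by auto
  have "card ?Q \<le> card (Ef \<inter> E1)" by (rule card_inj_on_le[OF inj im finEf1])
  moreover have "card (nb (V1,E1) z) \<le> card (?P \<union> ?Q)" using card_mono[OF _ sub] fP fQ by blast
  ultimately show ?thesis using card_Un_le[of ?P ?Q] by linarith
qed

lemma K3:
  assumes F: "Vf \<subseteq> V1 \<union> V2" "Ef \<subseteq> E1 \<union> E2 \<union> M1 \<union> M2"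
  and a1: "card (Vf \<inter> V1) + card (Ef \<inter> E1) = 2*n - 2"
  and t: "card (Vf \<inter> V2) + card (Ef \<inter> (M1 \<union> M2)) \<le> 1" and t2: "card (Vf \<inter> V2) + card (Ef \<inter> E2) \<le> 1"
  and ni: "\<not> has_isolated_vertex (delete G (Vf,Ef))"
  shows "\<exists>f. fractional_perfect_matching (delete G (Vf,Ef)) f"
proof (cases "\<exists>x. x \<in> V1 - Vf \<and> (\<forall>e\<in>EH1 Vf Ef. x \<notin> e)")
  case True
  then obtain x where x: "x \<in> V1 - Vf" and iso: "\<forall>e\<in>EH1 Vf Ef. x \<notin> e" by blast
  have a1le: "card (Vf \<inter> V1) + card (Ef \<inter> E1) \<le> 2*n - 2" using a1 by simp
  have oth: "\<exists>e\<in>EH1 Vf Ef. y \<in> e" if "y \<in> V1 - Vf" "y \<noteq> x" for y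
  proof (rule ccontr)
    assume "\<not> (\<exists>e\<in>EH1 Vf Ef. y \<in> e)"
    hence yi: "\<forall>e\<in>EH1 Vf Ef. y \<notin> e" by blast
    have "x \<noteq> y" using that(2) by simp
    thus False using uniq_iso[OF a1le x iso that(1) yi] by blast
  qed
  have EH1sub: "EH1 Vf Ef \<subseteq> {e \<in> E1 - B. e \<inter> A = {}}" if "A \<subseteq> Vf" "B \<subseteq> Ef" for A B
    using that unfolding EH1_def by blast
  show ?thesis
  proof (cases "\<exists>z. z \<in> Vf \<inter> V1 \<and> {x,z} \<in> E1 - Ef")
    case True
    then obtain z where z: "z \<in> Vf \<inter> V1" "{x,z} \<in> E1 - Ef" by blast
    have ni': "\<not> has_isolated_vertex (delete (V1,E1) (Vf \<inter> V1 - {z}, Ef \<inter> E1))"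
    proof (rule noiso_intro)
      fix v assume v: "v \<in> verts (delete (V1,E1) (Vf \<inter> V1 - {z}, Ef \<inter> E1))"
      show "\<exists>e\<in>edges (delete (V1,E1) (Vf \<inter> V1 - {z}, Ef \<inter> E1)). v \<in> e"
      proof (cases "v = z \<or> v = x")
        case True
        have "{x,z} \<in> edges (delete (V1,E1) (Vf \<inter> V1 - {z}, Ef \<inter> E1))" using z x by auto
        thus ?thesis using True by blast
      next
        case False
        hence "v \<in> V1 - Vf" using v by auto
        then obtain e where "e \<in> EH1 Vf Ef" "v \<in> e" using oth False by blast
        moreover have "EH1 Vf Ef \<subseteq> edges (delete (V1,E1) (Vf \<inter> V1 - {z}, Ef \<inter> E1))"
          unfolding EH1_def by auto
        ultimately show ?thesis by blast
      qed
    qed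
    show ?thesis by (rule VR[OF F a1 t t2 z(1) ni'])
  next
    case False
    have star_sub: "{e \<in> E1. x \<in> e} \<subseteq> Ef \<inter> E1"
    proof
      fix e assume e: "e \<in> {e \<in> E1. x \<in> e}"
      show "e \<in> Ef \<inter> E1"
      proof (rule ccontr)
        assume "e \<notin> Ef \<inter> E1"
        hence ne: "e \<notin> Ef" using e by blast
        have "e \<notin> EH1 Vf Ef" using iso e by blast
        then obtain y where y: "y \<in> e" "y \<in> Vf" using ne e unfolding EH1_def by blast
        have "y \<in> V1" using E1sub e y by blast
        have "y \<noteq> x" using x y by blast
        hence "e = {x,y}" using E1_2 e y by blast
        thus False using False y \<open>y \<in> V1\<close> e ne by blast
      qed
    qed
    have "card (Ef \<inter> E1) \<ge> 2*n - 3" using card_mono[OF finEf1 star_sub] star1_card x by simp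
    hence cV: "card (Vf \<inter> V1) \<le> 1" using a1 n5 by linarith
    let ?S = "nb (V1,E1) x - Vf"
    have fS: "finite ?S" using nb1_fin by simp
    have cS: "card ?S \<ge> 2"
    proof -
      have "nb (V1,E1) x \<inter> Vf \<subseteq> Vf \<inter> V1" using nb1_sub by blast
      hence "card (nb (V1,E1) x \<inter> Vf) \<le> 1" using card_mono[OF finV1] cV by (meson order_trans)
      moreover have "card (nb (V1,E1) x) = card ?S + card (nb (V1,E1) x \<inter> Vf)"
      proof -
        have e: "nb (V1,E1) x = ?S \<union> (nb (V1,E1) x \<inter> Vf)" by blast
        have "card (?S \<union> (nb (V1,E1) x \<inter> Vf)) = card ?S + card (nb (V1,E1) x \<inter> Vf)"
          by (rule card_Un_disjoint) (use nb1_fin in auto)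
        thus ?thesis using e by simp
      qed
      moreover have "card (nb (V1,E1) x) = 2*n - 3" using nb1_card x by blast
      ultimately show ?thesis using n5 by linarith
    qed
    have xS: "x \<notin> ?S"
    proof
      assume "x \<in> ?S"
      hence "{x,x} \<in> E1" unfolding nb_def by simp
      thus False using wfe_card2[OF wf1] by fastforce
    qed
    obtain z u where zu: "z \<in> ?S" "u \<in> {x,z}" "\<not> dopt Vf Ef u"
    proof (cases "dopt Vf Ef x")
      case False
      obtain z where "z \<in> ?S" using cS fS two_elems by metis
      thus ?thesis using that False by blast
    next
      case True
      let ?Dop = "{w \<in> V1. dopt Vf Ef w}"
      have fD: "finite ?Dop" using fin1 by simp
      have "?S \<inter> ?Dop \<subseteq> ?Dop - {x}" using xS by blast
      hence "card (?S \<inter> ?Dop) \<le> card (?Dop - {x})" using card_mono fD by blast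
      also have "\<dots> = card ?Dop - 1" using True x fD by simp
      finally have "card (?S \<inter> ?Dop) \<le> 1" using dopt_card[OF t] by linarith
      moreover have "card ?S \<le> card (?S - ?Dop) + card (?S \<inter> ?Dop)"
      proof -
        have "?S = (?S - ?Dop) \<union> (?S \<inter> ?Dop)" by blast
        hence "card ?S = card ((?S - ?Dop) \<union> (?S \<inter> ?Dop))" by simp
        also have "\<dots> \<le> card (?S - ?Dop) + card (?S \<inter> ?Dop)" by (rule card_Un_le)
        finally show ?thesis .
      qed
      ultimately have "card (?S - ?Dop) \<ge> 1" using cS by linarith
      hence "?S - ?Dop \<noteq> {}" by (metis card.empty not_one_le_zero)
      then obtain z where z: "z \<in> ?S" "z \<notin> ?Dop" by blast
      have "z \<in> V1" using z nb1_sub by blast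
      hence "\<not> dopt Vf Ef z" using z by blast
      thus ?thesis using that z by blast
    qed
    let ?r = "{x,z}"
    have zV: "z \<in> V1" "z \<notin> Vf" using zu nb1_sub by auto
    have rE: "?r \<in> E1" using zu unfolding nb_def by simp
    have rEf: "?r \<in> Ef \<inter> E1" using star_sub rE by blast
    have rV: "?r \<inter> Vf = {}" using x zV by auto
    have ni': "\<not> has_isolated_vertex (delete (V1,E1) (Vf \<inter> V1, Ef \<inter> E1 - {?r}))"
    proof (rule noiso_intro)
      fix v assume v: "v \<in> verts (delete (V1,E1) (Vf \<inter> V1, Ef \<inter> E1 - {?r}))"
      show "\<exists>e\<in>edges (delete (V1,E1) (Vf \<inter> V1, Ef \<inter> E1 - {?r})). v \<in> e"
      proof (cases "v \<in> ?r")
        case True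
        have "?r \<in> edges (delete (V1,E1) (Vf \<inter> V1, Ef \<inter> E1 - {?r}))" using rE rV by auto
        thus ?thesis using True by blast
      next
        case False
        hence "v \<in> V1 - Vf" "v \<noteq> x" using v by auto
        then obtain e where "e \<in> EH1 Vf Ef" "v \<in> e" using oth by blast
        moreover have "EH1 Vf Ef \<subseteq> edges (delete (V1,E1) (Vf \<inter> V1, Ef \<inter> E1 - {?r}))"
          unfolding EH1_def by auto
        ultimately show ?thesis by blast
      qed
    qed
    show ?thesis by (rule ER[OF F a1 t t2 rEf rV zu(2,3) ni'])
  qed
next
  case False
  hence noiso: "\<exists>e\<in>EH1 Vf Ef. y \<in> e" if "y \<in> V1 - Vf" for y using that by blast
  show ?thesis
  proof (cases "card (Ef \<inter> E1) \<ge> 2")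
    case True
    obtain r1 r2 where r12: "r1 \<in> Ef \<inter> E1" "r2 \<in> Ef \<inter> E1" "r1 \<noteq> r2"
      using two_elems[OF finEf1 True] by metis
    obtain r u where ru: "r \<in> {r1,r2}" "u \<in> r" "\<not> dopt Vf Ef u"
      using good_edge[OF t, of r1 r2] r12 by blast
    have rEf: "r \<in> Ef \<inter> E1" using ru r12 by blast
    have ni': "\<not> has_isolated_vertex (delete (V1,E1) (Vf \<inter> V1, Ef \<inter> E1 - {r}))"
    proof (rule noiso_intro)
      fix v assume v: "v \<in> verts (delete (V1,E1) (Vf \<inter> V1, Ef \<inter> E1 - {r}))"
      hence "v \<in> V1 - Vf" by auto
      then obtain e where "e \<in> EH1 Vf Ef" "v \<in> e" using noiso by blast
      moreover have "EH1 Vf Ef \<subseteq> edges (delete (V1,E1) (Vf \<inter> V1, Ef \<inter> E1 - {r}))"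
        unfolding EH1_def by auto
      ultimately show "\<exists>e\<in>edges (delete (V1,E1) (Vf \<inter> V1, Ef \<inter> E1 - {r})). v \<in> e" by blast
    qed
    show ?thesis
    proof (cases "r \<inter> Vf = {}")
      case True thus ?thesis using ER[OF F a1 t t2 rEf True ru(2,3) ni'] by blast
    next
      case False
      have "r \<subseteq> V1" using E1sub rEf by blast
      hence rV: "r \<inter> (Vf \<inter> V1) \<noteq> {}" using False by blast
      have geq: "delete (V1,E1) (Vf \<inter> V1, Ef \<inter> E1 - {r}) = delete (V1,E1) (Vf \<inter> V1, Ef \<inter> E1)"
        unfolding delete_def using rV by auto
      have cB: "card (Ef \<inter> E1 - {r}) = card (Ef \<inter> E1) - 1" using rEf finEf1 by simp
      hence "card (Vf \<inter> V1) + card (Ef \<inter> E1 - {r}) \<le> 2*n - 3" using a1 True by linarith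
      then obtain g where "fractional_perfect_matching (delete (V1,E1) (Vf \<inter> V1, Ef \<inter> E1 - {r})) g"
        using T2[of "Vf \<inter> V1" "Ef \<inter> E1 - {r}"] ni' by blast
      hence g: "\<exists>g. fractional_perfect_matching (delete (V1,E1) (Vf \<inter> V1, Ef \<inter> E1)) g" using geq by auto
      have k: "\<exists>k. fractional_perfect_matching (delete (V2,E2) (Vf \<inter> V2, Ef \<inter> E2)) k"
        using T1b[of "Vf \<inter> V2" "Ef \<inter> E2"] t2 n5 by simp
      show ?thesis by (rule export_none[OF g k])
    qed
  next
    case False
    hence e1: "card (Ef \<inter> E1) \<le> 1" by simp
    have "\<exists>z\<in>Vf \<inter> V1. \<exists>e\<in>E1 - Ef. z \<in> e \<and> e \<inter> (Vf \<inter> V1 - {z}) = {}"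
    proof (rule ccontr)
      assume na: "\<not> ?thesis"
      have cV: "card (Vf \<inter> V1) \<ge> 2" using a1 e1 n5 by linarith
      obtain z1 z2 where z: "z1 \<in> Vf \<inter> V1" "z2 \<in> Vf \<inter> V1" "z1 \<noteq> z2"
        using two_elems[OF finV1 cV] by metis
      let ?A = "nb (V1,E1) z1 \<inter> (Vf \<inter> V1)" and ?B = "nb (V1,E1) z2 \<inter> (Vf \<inter> V1)"
      have kA: "card (nb (V1,E1) z1) \<le> card ?A + card (Ef \<inter> E1)"
        by (rule nb_kill2) (use z na in auto)
      have kB: "card (nb (V1,E1) z2) \<le> card ?B + card (Ef \<inter> E1)"
        by (rule nb_kill2) (use z na in auto)
      have fAB: "finite ?A" "finite ?B" using nb1_fin by simp_all
      have U: "card (?A \<union> ?B) \<le> card (Vf \<inter> V1)" by (rule card_mono[OF finV1]) blast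
      have I: "card (?A \<inter> ?B) \<le> 2*n - 6"
      proof -
        have "card (?A \<inter> ?B) \<le> card (nb (V1,E1) z1 \<inter> nb (V1,E1) z2)"
          by (rule card_mono) (use nb1_fin in auto)
        thus ?thesis using nb1_common[of z1 z2] z by simp
      qed
      have "card ?A + card ?B = card (?A \<union> ?B) + card (?A \<inter> ?B)" by (rule card_Un_Int[OF fAB])
      thus False using kA kB U I nb1_card[of z1] nb1_card[of z2] z a1 e1 n5 by simp
    qed
    then obtain z e where ze: "z \<in> Vf \<inter> V1" "e \<in> E1 - Ef" "z \<in> e" "e \<inter> (Vf \<inter> V1 - {z}) = {}" by blast
    have ni': "\<not> has_isolated_vertex (delete (V1,E1) (Vf \<inter> V1 - {z}, Ef \<inter> E1))"
    proof (rule noiso_intro)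
      fix v assume v: "v \<in> verts (delete (V1,E1) (Vf \<inter> V1 - {z}, Ef \<inter> E1))"
      show "\<exists>e\<in>edges (delete (V1,E1) (Vf \<inter> V1 - {z}, Ef \<inter> E1)). v \<in> e"
      proof (cases "v = z")
        case True
        have "e \<in> edges (delete (V1,E1) (Vf \<inter> V1 - {z}, Ef \<inter> E1))" using ze by auto
        thus ?thesis using True ze by blast
      next
        case False
        hence "v \<in> V1 - Vf" using v by auto
        then obtain e where "e \<in> EH1 Vf Ef" "v \<in> e" using noiso by blast
        moreover have "EH1 Vf Ef \<subseteq> edges (delete (V1,E1) (Vf \<inter> V1 - {z}, Ef \<inter> E1))"
          unfolding EH1_def by auto
        ultimately show ?thesis by blast
      qed
    qed
    show ?thesis by (rule VR[OF F a1 t t2 ze(1) ni'])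
  qed
qed

end

context mainc begin

lemma choose_sub:
  assumes p: "card (Vf \<inter> V1) + card (Ef \<inter> E1) = 2*n - 1"
  obtains A B where "A \<subseteq> Vf \<inter> V1" "B \<subseteq> Ef \<inter> E1" "card A + card B = 2*n - 4" "even (card A)"
    "finite A" "finite B"
proof (cases "card (Vf \<inter> V1) \<ge> 2*n - 4")
  case True
  obtain A where A: "A \<subseteq> Vf \<inter> V1" "card A = 2*n - 4" "finite A"
    using obtain_subset_with_card_n[OF True] by metis
  show ?thesis by (rule that[of A "{}"]) (use A n5 in auto)
next
  case False
  define a where "a = (if even (card (Vf \<inter> V1)) then card (Vf \<inter> V1) else card (Vf \<inter> V1) - 1)"
  have ale: "a \<le> card (Vf \<inter> V1)" "even a" "a + 1 \<ge> card (Vf \<inter> V1)" unfolding a_def by auto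
  obtain A where A: "A \<subseteq> Vf \<inter> V1" "card A = a" "finite A"
    using obtain_subset_with_card_n[OF ale(1)] by metis
  have ble: "2*n - 4 - a \<le> card (Ef \<inter> E1)" using ale p False n5 by linarith
  obtain B where B: "B \<subseteq> Ef \<inter> E1" "card B = 2*n - 4 - a" "finite B"
    using obtain_subset_with_card_n[OF ble] by metis
  have "a \<le> 2*n - 4" using False ale by linarith
  thus ?thesis using that[of A B] A B ale by auto
qed

lemma match_one:
  assumes m: "matching H Mt" and e1: "e1 \<in> Mt" "e2 \<in> Mt" "w \<in> e1" "w \<in> e2" shows "e1 = e2"
  using m e1 unfolding matching_def by blast

lemma K4:
  assumes F: "Vf \<subseteq> V1 \<union> V2" "Ef \<subseteq> E1 \<union> E2 \<union> M1 \<union> M2"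
  and a1: "card (Vf \<inter> V1) + card (Ef \<inter> E1) = 2*n - 1"
  and noV2: "Vf \<inter> V2 = {}" and noE2: "Ef \<inter> E2 = {}" and noM: "Ef \<inter> (M1 \<union> M2) = {}"
  shows "\<exists>f. fractional_perfect_matching (delete G (Vf,Ef)) f"
proof -
  obtain A B where AB: "A \<subseteq> Vf \<inter> V1" "B \<subseteq> Ef \<inter> E1" "card A + card B = 2*n - 4" "even (card A)"
    "finite A" "finite B"
    using choose_sub[OF a1] by metis
  have "A \<subseteq> V1" "B \<subseteq> E1" "card A + card B < 2*n - 3" using AB n5 by auto
  then obtain Mt where pm: "perfect_matching (delete (V1,E1) (A,B)) Mt" using T3 AB(4) by blast
  let ?EG = "edges (delete (V1,E1) (A,B))"
  have mt: "matching (delete (V1,E1) (A,B)) Mt" and cov: "\<Union>Mt = V1 - A"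
    using pm unfolding perfect_matching_def by auto
  have MtEG: "Mt \<subseteq> ?EG" using mt unfolding matching_def by blast
  have MtE1: "Mt \<subseteq> E1" using MtEG by auto
  have finMt: "finite Mt" using MtE1 finE1 finite_subset by blast
  define U where "U = {w \<in> V1 - Vf. \<not> (\<exists>e\<in>Mt \<inter> EH1 Vf Ef. w \<in> e)}"
  define g :: "'a set \<Rightarrow> real" where "g e = (if e \<in> Mt then 1 else 0)" for e
  have UV: "U \<subseteq> V1 - Vf" unfolding U_def by blast
  have finU: "finite U" using fin1 UV finite_subset by blast
  have gb: "\<forall>e\<in>EH1 Vf Ef. 0 \<le> g e \<and> g e \<le> 1" unfolding g_def by simp
  have gs: "\<forall>w\<in>V1 - Vf. (\<Sum>e\<in>{e \<in> EH1 Vf Ef. w\<in>e}. g e) = 1 - (if w \<in> U then 1 else 0)"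
  proof
    fix w assume w: "w \<in> V1 - Vf"
    have fin: "finite {e \<in> EH1 Vf Ef. w\<in>e}" using finE1 unfolding EH1_def by simp
    have "(\<Sum>e\<in>{e \<in> EH1 Vf Ef. w\<in>e}. g e) = (\<Sum>e\<in>{e \<in> EH1 Vf Ef. w\<in>e}. if e \<in> Mt then (\<lambda>_. 1::real) e else 0)"
      unfolding g_def by simp
    also have "\<dots> = (\<Sum>e\<in>{e \<in> EH1 Vf Ef. w\<in>e} \<inter> Mt. (\<lambda>_. 1::real) e)"
      by (rule sum.inter_restrict[OF fin, symmetric])
    also have "\<dots> = card ({e \<in> EH1 Vf Ef. w\<in>e} \<inter> Mt)" by simp
    also have "card ({e \<in> EH1 Vf Ef. w\<in>e} \<inter> Mt) = (if w \<in> U then 0 else 1)"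
    proof (cases "w \<in> U")
      case True
      hence e0: "{e \<in> EH1 Vf Ef. w\<in>e} \<inter> Mt = {}" unfolding U_def by blast
      show ?thesis unfolding e0 using True by simp
    next
      case False
      then obtain e0 where e0: "e0 \<in> Mt" "e0 \<in> EH1 Vf Ef" "w \<in> e0" using w unfolding U_def by blast
      have "{e \<in> EH1 Vf Ef. w\<in>e} \<inter> Mt = {e0}" using e0 match_one[OF mt e0(1) _ e0(3)] by blast
      thus ?thesis using False by simp
    qed
    finally show "(\<Sum>e\<in>{e \<in> EH1 Vf Ef. w\<in>e}. g e) = 1 - (if w \<in> U then 1 else 0)" by simp
  qed
  let ?N = "{e \<in> Mt. e \<in> (Ef \<inter> E1) - B \<or> e \<inter> ((Vf \<inter> V1) - A) \<noteq> {}}"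
  have UN: "U \<subseteq> \<Union>?N"
  proof
    fix w assume wU: "w \<in> U"
    hence w: "w \<in> V1 - Vf" unfolding U_def by blast
    hence "w \<in> V1 - A" using AB by blast
    then obtain e where e: "e \<in> Mt" "w \<in> e" using cov by blast
    have "e \<notin> EH1 Vf Ef" using wU e unfolding U_def by blast
    moreover have eG: "e \<in> E1" "e \<notin> B" "e \<inter> A = {}" using e MtEG by auto
    ultimately have "e \<in> Ef \<or> e \<inter> Vf \<noteq> {}" unfolding EH1_def by blast
    moreover have "e \<subseteq> V1" using E1sub eG by blast
    ultimately have "e \<in> ?N" using e eG by blast
    thus "w \<in> \<Union>?N" using e by blast
  qed
  have Nsub: "?N \<subseteq> ((Ef \<inter> E1) - B) \<union> (\<Union>z\<in>(Vf \<inter> V1) - A. {e \<in> Mt. z \<in> e})" by blast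
  have one: "card {e \<in> Mt. z \<in> e} \<le> 1" for z
  proof (cases "{e \<in> Mt. z \<in> e} = {}")
    case True show ?thesis unfolding True by simp
  next
    case False
    then obtain e0 where e0: "e0 \<in> Mt" "z \<in> e0" by blast
    have "{e \<in> Mt. z \<in> e} = {e0}" using e0 match_one[OF mt e0(1) _ e0(2)] by blast
    thus ?thesis by simp
  qed
  have cN: "card ?N \<le> 3"
  proof -
    have f1: "finite ((Ef \<inter> E1) - B)" using finEf1 by simp
    have f2: "finite (\<Union>z\<in>(Vf \<inter> V1) - A. {e \<in> Mt. z \<in> e})" using finV1 finMt by simp
    have "card ?N \<le> card (((Ef \<inter> E1) - B) \<union> (\<Union>z\<in>(Vf \<inter> V1) - A. {e \<in> Mt. z \<in> e}))"
      by (rule card_mono[OF _ Nsub]) (use f1 f2 in simp)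
    also have "\<dots> \<le> card ((Ef \<inter> E1) - B) + card (\<Union>z\<in>(Vf \<inter> V1) - A. {e \<in> Mt. z \<in> e})"
      by (rule card_Un_le)
    also have "card (\<Union>z\<in>(Vf \<inter> V1) - A. {e \<in> Mt. z \<in> e}) \<le> (\<Sum>z\<in>(Vf \<inter> V1) - A. card {e \<in> Mt. z \<in> e})"
      by (rule card_UN_le) (use finV1 in simp)
    also have "\<dots> \<le> (\<Sum>z\<in>(Vf \<inter> V1) - A. 1)" by (rule sum_mono) (rule one)
    also have "\<dots> = card ((Vf \<inter> V1) - A)" by simp
    finally have "card ?N \<le> card ((Ef \<inter> E1) - B) + card ((Vf \<inter> V1) - A)" by simp
    moreover have "card ((Ef \<inter> E1) - B) = card (Ef \<inter> E1) - card B" using AB finEf1 by (simp add: card_Diff_subset)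
    moreover have "card ((Vf \<inter> V1) - A) = card (Vf \<inter> V1) - card A" using AB finV1 by (simp add: card_Diff_subset)
    moreover have "card B \<le> card (Ef \<inter> E1)" "card A \<le> card (Vf \<inter> V1)"
      using AB card_mono finEf1 finV1 by blast+
    ultimately show ?thesis using a1 AB(3) n5 by linarith
  qed
  have cU: "card U \<le> 6"
  proof -
    have finN: "finite ?N" using finMt by simp
    have "\<Union>?N \<subseteq> V1" using MtE1 E1sub by blast
    hence "finite (\<Union>?N)" using fin1 finite_subset by blast
    hence "card U \<le> card (\<Union>?N)" using UN card_mono by blast
    also have "\<dots> \<le> sum card ?N" by (rule card_Union_le_sum_card)
    also have "\<dots> = sum (\<lambda>_. 2) ?N"
    proof (rule sum.cong[OF refl])
      fix e assume "e \<in> ?N"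
      hence "e \<in> E1" using MtEG by auto
      thus "card e = 2" using wfe_card2[OF wf1] by blast
    qed
    also have "\<dots> = 2 * card ?N" by simp
    finally show ?thesis using cN by linarith
  qed
  define sg where "sg w = (SOME v. {w,v} \<in> M1)" for w
  have sg1: "{w, sg w} \<in> M1" "sg w \<in> V2" if wV1: "w \<in> V1" for w
  proof -
    obtain v where "v \<in> V2" "{v. {w,v} \<in> M1} = {v}" using part1[OF wV1] by blast
    hence "{w,v} \<in> M1" by blast
    thus "{w, sg w} \<in> M1" unfolding sg_def by (rule someI)
    thus "sg w \<in> V2" using cross_other wV1 by blast
  qed
  have sgo: "\<forall>w\<in>U. sg w \<in> V2 - Vf \<and> {w, sg w} \<in> (M1 \<union> M2) - Ef"
    using sg1 UV noV2 noM by blast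
  have inj: "inj_on sg U"
  proof (rule inj_onI)
    fix w w' assume ww: "w \<in> U" "w' \<in> U" "sg w = sg w'"
    have wV: "w \<in> V1" "w' \<in> V1" using ww UV by auto
    interpret S: twoh V2 E2 V1 E1 M1 M2 by (rule sym)
    obtain u where u: "{x. {sg w, x} \<in> M1} = {u}" using S.part1 sg1(2)[OF wV(1)] by blast
    have "{sg w, w} \<in> M1" "{sg w, w'} \<in> M1" using sg1[OF wV(1)] sg1[OF wV(2)] ww(3)
      by (simp_all add: insert_commute)
    hence "w \<in> {x. {sg w, x} \<in> M1}" "w' \<in> {x. {sg w, x} \<in> M1}" by simp_all
    thus "w = w'" unfolding u by simp
  qed
  have sz: "card (Vf \<inter> V2) + card (Ef \<inter> E2) + card U \<le> 2*n - 4" using noV2 noE2 cU n5 by simp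
  show ?thesis by (rule export_single[OF UV finU sz sgo inj _ _ gb gs]) simp_all
qed

end

context mainc begin

lemma main1:
  assumes F: "Vf \<subseteq> V1 \<union> V2" "Ef \<subseteq> E1 \<union> E2 \<union> M1 \<union> M2"
  and sz: "card Vf + card Ef \<le> 2*n - 1"
  and ni: "\<not> has_isolated_vertex (delete G (Vf,Ef))"
  and ge: "card (Vf \<inter> V2) + card (Ef \<inter> E2) \<le> card (Vf \<inter> V1) + card (Ef \<inter> E1)"
  shows "\<exists>f. fractional_perfect_matching (delete G (Vf,Ef)) f"
proof -
  have cVf: "card Vf = card (Vf \<inter> V1) + card (Vf \<inter> V2)"
  proof -
    have "Vf = (Vf \<inter> V1) \<union> (Vf \<inter> V2)" using F by blast
    moreover have "card ((Vf \<inter> V1) \<union> (Vf \<inter> V2)) = card (Vf \<inter> V1) + card (Vf \<inter> V2)"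
      by (rule card_Un_disjoint) (use fin1 fin2 disj in auto)
    ultimately show ?thesis by simp
  qed
  have cEf: "card Ef = card (Ef \<inter> E1) + card (Ef \<inter> E2) + card (Ef \<inter> (M1 \<union> M2))"
  proof -
    have "Ef = ((Ef \<inter> E1) \<union> (Ef \<inter> E2)) \<union> (Ef \<inter> (M1 \<union> M2))" using F by blast
    moreover have "card ((Ef \<inter> E1) \<union> (Ef \<inter> E2)) = card (Ef \<inter> E1) + card (Ef \<inter> E2)"
      by (rule card_Un_disjoint) (use finE1 finE2 E12 in auto)
    moreover have "card (((Ef \<inter> E1) \<union> (Ef \<inter> E2)) \<union> (Ef \<inter> (M1 \<union> M2))) =
        card ((Ef \<inter> E1) \<union> (Ef \<inter> E2)) + card (Ef \<inter> (M1 \<union> M2))"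
      by (rule card_Un_disjoint) (use finE1 finE2 finM M_not_E1 M_not_E2 in auto)
    ultimately show ?thesis by simp
  qed
  let ?a1 = "card (Vf \<inter> V1) + card (Ef \<inter> E1)" and ?a2 = "card (Vf \<inter> V2) + card (Ef \<inter> E2)"
    and ?am = "card (Ef \<inter> (M1 \<union> M2))"
  have tot: "?a1 + ?a2 + ?am \<le> 2*n - 1" using sz cVf cEf by linarith
  have k2: "?a2 < 2*n - 3 \<Longrightarrow> \<exists>k. fractional_perfect_matching (delete (V2,E2) (Vf \<inter> V2, Ef \<inter> E2)) k"
    using T1b[of "Vf \<inter> V2" "Ef \<inter> E2"] by simp
  show ?thesis
  proof (cases "?a1 \<le> 2*n - 4")
    case True
    have g: "\<exists>g. fractional_perfect_matching (delete (V1,E1) (Vf \<inter> V1, Ef \<inter> E1)) g"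
      using T1[of "Vf \<inter> V1" "Ef \<inter> E1"] True n5 by simp
    show ?thesis by (rule export_none[OF g k2]) (use True ge n5 in linarith)
  next
    case False
    show ?thesis
    proof (cases "?a1 = 2*n - 3")
      case a13: True
      hence a2: "?a2 \<le> 2" using tot n5 by linarith
      show ?thesis
      proof (cases "\<exists>x. x \<in> V1 - Vf \<and> (\<forall>e\<in>EH1 Vf Ef. x \<notin> e)")
        case True
        then obtain x where "x \<in> V1 - Vf" "\<forall>e\<in>EH1 Vf Ef. x \<notin> e" by blast
        thus ?thesis using K2[OF F a13 a2 _ _ ni] by blast
      next
        case False
        have ni1: "\<not> has_isolated_vertex (delete (V1,E1) (Vf \<inter> V1, Ef \<inter> E1))"
        proof (rule noiso_intro)
          fix v assume "v \<in> verts (delete (V1,E1) (Vf \<inter> V1, Ef \<inter> E1))"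
          hence "v \<in> V1 - Vf" by auto
          then obtain e where "e \<in> EH1 Vf Ef" "v \<in> e" using False by blast
          thus "\<exists>e\<in>edges (delete (V1,E1) (Vf \<inter> V1, Ef \<inter> E1)). v \<in> e" unfolding EH1_eq by blast
        qed
        have g: "\<exists>g. fractional_perfect_matching (delete (V1,E1) (Vf \<inter> V1, Ef \<inter> E1)) g"
          using T2[of "Vf \<inter> V1" "Ef \<inter> E1"] a13 ni1 by simp
        show ?thesis by (rule export_none[OF g k2]) (use a2 n5 in linarith)
      qed
    next
      case False2: False
      show ?thesis
      proof (cases "?a1 = 2*n - 2")
        case a12: True
        have t: "card (Vf \<inter> V2) + ?am \<le> 1" and t2: "?a2 \<le> 1" using tot a12 n5 by linarith+
        show ?thesis by (rule K3[OF F a12 t t2 ni])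
      next
        case False3: False
        have a11: "?a1 = 2*n - 1" using False False2 False3 tot by linarith
        have z: "?a2 = 0" "?am = 0" using a11 tot by linarith+
        have noV2: "Vf \<inter> V2 = {}" using z fin2 by simp
        have noE2: "Ef \<inter> E2 = {}" using z finE2 by simp
        have noM: "Ef \<inter> (M1 \<union> M2) = {}" using z finM by simp
        show ?thesis by (rule K4[OF F a11 noV2 noE2 noM])
      qed
    qed
  qed
qed

end

lemma key_G:
  fixes G :: "'a graph"
  assumes gG: "gaq n G" and n5: "n \<ge> 5"
    and h1: "\<forall>G :: 'a graph. gaq (n - 1) G \<longrightarrow> even_strongly_super_matched G"
    and h2: "\<forall>G :: 'a graph. gaq (n - 1) G \<longrightarrow> fractional_strongly_super_matched G"
    and F: "fault_set G (Vf,Ef)" and sz: "fsize (Vf,Ef) \<le> 2*n - 1"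
    and ni: "\<not> has_isolated_vertex (delete G (Vf,Ef))"
  shows "\<exists>f. fractional_perfect_matching (delete G (Vf,Ef)) f"
  using gG
proof (cases rule: gaq.cases)
  case (base f)
  have "n = 4" using base(1) .
  thus ?thesis using n5 by simp
next
  case (step m V1 E1 V2 E2 M1 M2)
  have nm: "n = Suc m" using step(1) .
  have m: "m = n - 1" using nm by simp
  have s1: "gstruct (n-1) (V1,E1)" using gaq_struct[OF step(3)] m by simp
  have s2: "gstruct (n-1) (V2,E2)" using gaq_struct[OF step(4)] m by simp
  have q1: "gaq (n-1) (V1,E1)" using step(3) m by simp
  have q2: "gaq (n-1) (V2,E2)" using step(4) m by simp
  have e1: "even_strongly_super_matched (V1,E1)" "fractional_strongly_super_matched (V1,E1)"
    using h1 h2 q1 by blast+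
  have e2: "even_strongly_super_matched (V2,E2)" "fractional_strongly_super_matched (V2,E2)"
    using h1 h2 q2 by blast+
  interpret T: twoh V1 E1 V2 E2 M1 M2
  proof
    show "finite V1" "wfe V1 E1" using s1 unfolding gstruct_def by simp_all
    show "finite V2" "wfe V2 E2" using s2 unfolding gstruct_def by simp_all
    show "V1 \<inter> V2 = {}" by (rule step(5))
    show "perfect_matching_between M1 V1 V2" by (rule step(6))
    show "perfect_matching_between M2 V1 V2" by (rule step(7))
    show "M1 \<inter> M2 = {}" by (rule step(8))
  qed
  interpret MC: mainc V1 E1 V2 E2 M1 M2 n
  proof (rule mainc.intro[OF T.twoh_axioms], unfold_locales)
  qed (fact n5 s1 s2 e1 e2)+
  interpret S: twoh V2 E2 V1 E1 M1 M2 by (rule T.sym)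
  interpret MS: mainc V2 E2 V1 E1 M1 M2 n
  proof (rule mainc.intro[OF S.twoh_axioms], unfold_locales)
  qed (fact n5 s1 s2 e1 e2)+
  have GG: "G = (V1 \<union> V2, E1 \<union> E2 \<union> M1 \<union> M2)" using step by simp
  have GS: "(V2 \<union> V1, E2 \<union> E1 \<union> M1 \<union> M2) = G" using GG by auto
  have FV: "Vf \<subseteq> V1 \<union> V2" "Ef \<subseteq> E1 \<union> E2 \<union> M1 \<union> M2" using F GG unfolding fault_set_def by auto
  have sz': "card Vf + card Ef \<le> 2*n - 1" using sz unfolding fsize_def by simp
  show ?thesis
  proof (cases "card (Vf \<inter> V2) + card (Ef \<inter> E2) \<le> card (Vf \<inter> V1) + card (Ef \<inter> E1)")
    case True
    thus ?thesis using MC.main1[OF FV sz'] ni GG by simp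
  next
    case False
    have FV': "Vf \<subseteq> V2 \<union> V1" "Ef \<subseteq> E2 \<union> E1 \<union> M1 \<union> M2" using FV by auto
    have ni': "\<not> has_isolated_vertex (delete (V2 \<union> V1, E2 \<union> E1 \<union> M1 \<union> M2) (Vf,Ef))" using ni GS by simp
    have "\<exists>f. fractional_perfect_matching (delete (V2 \<union> V1, E2 \<union> E1 \<union> M1 \<union> M2) (Vf,Ef)) f"
      by (rule MS.main1[OF FV' sz' ni']) (use False in linarith)
    thus ?thesis using GS by simp
  qed
qed

theorem theorem3p6:
  fixes n :: nat
  assumes "n \<ge> 5"
    and "\<forall>G :: 'a graph. gaq (n - 1) G \<longrightarrow> even_strongly_super_matched G"
    and "\<forall>G :: 'a graph. gaq (n - 1) G \<longrightarrow> fractional_strongly_super_matched G"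
  shows "\<forall>G :: 'a graph. gaq n G \<longrightarrow> fractional_strongly_super_matched G"
proof (intro allI impI)
  fix G :: "'a graph" assume gG: "gaq n G"
  have gs: "gstruct n G" using gaq_struct[OF gG] .
  have fin: "finite (verts G)" and wf: "wfe (verts G) (edges G)" using gs unfolding gstruct_def by simp_all
  have md: "min_degree G = 2*n - 1" using gstruct_min_degree[OF gs] .
  have deg: "card {e \<in> edges G. v \<in> e} = 2*n - 1" if "v \<in> verts G" for v
    using gstruct_degree[OF gs that] unfolding degree_def .
  have finE: "finite (edges G)" using wfe_finE[OF fin wf] .
  have key: "\<exists>f. fractional_perfect_matching (delete G F) f"
    if F: "fault_set G F" "fsize F \<le> 2*n - 1" "\<not> has_isolated_vertex (delete G F)" for F
  proof -
    obtain Vf Ef where "F = (Vf,Ef)" by (cases F)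
    thus ?thesis using key_G[OF gG assms(1) assms(2) assms(3)] F by simp
  qed
  have noiso: "\<not> has_isolated_vertex (delete G F)" if F: "fault_set G F" "fsize F \<le> 2*n - 2" for F
  proof
    assume "has_isolated_vertex (delete G F)"
    then obtain v where v: "v \<in> verts G - fst F" "\<forall>e\<in>edges (delete G F). v \<notin> e"
      unfolding has_isolated_vertex_def by auto
    have sub: "{e \<in> edges G. v \<in> e} \<subseteq> snd F \<union> (\<lambda>w. {v,w}) ` fst F"
    proof
      fix e assume e: "e \<in> {e \<in> edges G. v \<in> e}"
      show "e \<in> snd F \<union> (\<lambda>w. {v,w}) ` fst F"
      proof (cases "e \<in> snd F")
        case True thus ?thesis by blast
      next
        case False
        have "e \<notin> edges (delete G F)" using v e by blast
        hence "e \<inter> fst F \<noteq> {}" using e False by auto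
        then obtain w where w: "w \<in> e" "w \<in> fst F" by blast
        have "w \<noteq> v" using v w by blast
        hence "e = {v,w}" using two_set[OF wf] e w by blast
        thus ?thesis using w by blast
      qed
    qed
    have ff: "finite (fst F)" "finite (snd F)" using F fin finE unfolding fault_set_def
      using finite_subset by blast+
    have "card {e \<in> edges G. v \<in> e} \<le> card (snd F \<union> (\<lambda>w. {v,w}) ` fst F)"
      by (rule card_mono) (use ff sub in auto)
    also have "\<dots> \<le> card (snd F) + card ((\<lambda>w. {v,w}) ` fst F)" by (rule card_Un_le)
    also have "card ((\<lambda>w. {v,w}) ` fst F) \<le> card (fst F)" by (rule card_image_le[OF ff(1)])
    finally have "2*n - 1 \<le> fsize F" using deg v unfolding fsize_def by simp
    thus False using F assms(1) by simp
  qed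
  have lower: "2*n - 1 \<le> fsize F" if "fsmp_set G F" for F
  proof (rule ccontr)
    assume "\<not> ?thesis"
    hence s: "fsize F \<le> 2*n - 2" by simp
    have F: "fault_set G F" using that unfolding fsmp_set_def by simp
    have s': "fsize F \<le> 2*n - 1" using s by simp
    have "\<exists>f. fractional_perfect_matching (delete G F) f" using key[OF F s' noiso[OF F s]] .
    thus False using that unfolding fsmp_set_def by blast
  qed
  have "card (verts G) > 0" using gs unfolding gstruct_def by simp
  hence ne: "verts G \<noteq> {}" by auto
  then obtain v0 where v0: "v0 \<in> verts G" by blast
  let ?F0 = "({}, {e \<in> edges G. v0 \<in> e})"
  have F0: "fsmp_set G ?F0"
    unfolding fsmp_set_def
  proof
    show "fault_set G ?F0" unfolding fault_set_def by auto
    show "\<not> (\<exists>f. fractional_perfect_matching (delete G ?F0) f)"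
    proof
      assume "\<exists>f. fractional_perfect_matching (delete G ?F0) f"
      then obtain f where f: "fractional_perfect_matching (delete G ?F0) f" by blast
      have "v0 \<in> verts (delete G ?F0)" using v0 by simp
      hence "(\<Sum>e\<in>{e \<in> edges (delete G ?F0). v0 \<in> e}. f e) = 1"
        using f unfolding fractional_perfect_matching_def by blast
      moreover have e0: "{e \<in> edges (delete G ?F0). v0 \<in> e} = {}" by auto
      ultimately show False unfolding e0 by simp
    qed
  qed
  have sF0: "fsize ?F0 = 2*n - 1" using deg[OF v0] unfolding fsize_def by simp
  have fs: "fsmp G = 2*n - 1"
    unfolding fsmp_def
  proof (rule Least_equality)
    show "\<exists>F. fsmp_set G F \<and> fsize F = 2*n - 1" using F0 sF0 by blast
    show "\<And>y. \<exists>F. fsmp_set G F \<and> fsize F = y \<Longrightarrow> 2*n - 1 \<le> y" using lower by blast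
  qed
  show "fractional_strongly_super_matched G"
    unfolding fractional_strongly_super_matched_def fractional_strongly_maximally_matched_def
  proof (intro conjI allI impI)
    show "fsmp G = min_degree G" using fs md by simp
    fix F assume "optimal_fsmp_set G F"
    hence o: "fsmp_set G F" "fsize F = 2*n - 1" using fs unfolding optimal_fsmp_set_def by auto
    show "has_isolated_vertex (delete G F)"
    proof (rule ccontr)
      assume "\<not> ?thesis"
      hence "\<exists>f. fractional_perfect_matching (delete G F) f"
        using key[of F] o unfolding fsmp_set_def by simp
      thus False using o unfolding fsmp_set_def by blast
    qed
  qed
qed

end
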